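(* Let $d=1$, let the sampling be high frequency, and assume $A_0'$ and $A_1'$. Take $h_n=c\,n^{-1/5}$ with $0<c<\infty$. - If $\gamma_0<1$ and $\delta_n=d_1h_n$ with $0<d_1<\infty$, then $\mathrm{MISE}(\hat f_n^{FP})=O(T_n^{-1})$. - If $\gamma_0=1$ and $\delta_n=d_2h_n\ln(h_n^{-1})$ with $0<d_2<\infty$, then $\mathrm{MISE}(\hat f_n^{FP})=O(T_n^{-1}\ln T_n)$. Here $T_n=n\delta_n$.
   Context: Let $\{X_t,t\in\mathbb R\}$ be a measurable real-valued process. Every $X_t$ has Lebesgue density $f$. For $s\ne t$ the pair $(X_s,X_t)$ has a joint density $f_{(X_s,X_t)}=f_{(X_0,X_{|t-s|})}=:f_{|t-s|}$. For $u>0$ put $g_u(y,z)=f_u(y,z)-f(y)f(z)$. High frequency sampling: $t_k=k\delta_n$, with $\delta_n\to0$ and $T_n=n\delta_n\to\infty$. Frequency polygon. Bins are $[b_j,b_{j+1})$ of width $h_n$ with midpoints $c_j$. Set $\hat f_j=\frac1{nh_n}\sum_k\mathbf 1_{[b_j,b_{j+1})}(X_{t_k})$ and $\hat f_n^{FP}(x)=\frac{x-c_j}{h_n}\hat f_{j+1}+\frac{c_{j+1}-x}{h_n}\hat f_j$ for $x\in[c_j,c_{j+1})$. $\mathrm{MISE}(\hat f)=\mathrm E\int(\hat f-f)^2$. Assumptions. - $A_0'$: (i) $f\in\mathcal C^2(\mathbb R)$, $f''\in L_1$, $f,f''\in L_2$; (ii) $|f''(x)-f''(y)|\le l_0|x-y|^\nu$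 with $l_0>0$ and $\nu\in(0,1]$; (iii) $f$ continuous and bounded. - $A_1'(i)$: there exist $\gamma_0>0$, $u_0>0$ and a positive, continuous, integrable $\varphi$ with $\sup_zf_u(y,z)\le\varphi(y)u^{-\gamma_0}$ for $0<u\le u_0$. - $A_1'(ii)$: there exist a positive, continuous, integrable $k$ and a bounded, ultimately decreasing $\pi$ with $\int_{u_1}^\infty\pi<\infty$ for some $u_1>u_0$, such that $\sup_z|g_u(y,z)|\le k(y)\pi(u)$ for $u\ge u_0$. *)

theory Defs
  imports "HOL-Probability.Probability"
begin

text \<open>Bins are the grid intervals [x0 + j h, x0 + (j+1) h), j an integer,
  with midpoints x0 + (j + 1/2) h.  Sampling times are t_k = k delta, k = 1..n.\<close>

definition fp_bin :: "(real \<Rightarrow> 'w \<Rightarrow> real) \<Rightarrow> real \<Rightarrow> real \<Rightarrow> real \<Rightarrow> nat \<Rightarrow> int \<Rightarrow> 'w \<Rightarrow> real" where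
  "fp_bin X delta h x0 n j \<omega> =
     (1 / (real n * h)) *
     (\<Sum>k\<in>{1..n}. indicator {x0 + real_of_int j * h ..< x0 + (real_of_int j + 1) * h}
                          (X (real k * delta) \<omega>))"

definition fp_est :: "(real \<Rightarrow> 'w \<Rightarrow> real) \<Rightarrow> real \<Rightarrow> real \<Rightarrow> real \<Rightarrow> nat \<Rightarrow> 'w \<Rightarrow> real \<Rightarrow> real" where
  "fp_est X delta h x0 n \<omega> x =
     (let j = \<lfloor>(x - x0 - h / 2) / h\<rfloor>;
          cj = x0 + (real_of_int j + 1 / 2) * h;
          cj1 = x0 + (real_of_int j + 1 + 1 / 2) * h
      in ((x - cj) / h) * fp_bin X delta h x0 n (j + 1) \<omega>
         + ((cj1 - x) / h) * fp_bin X delta h x0 n j \<omega>)"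

definition mise_fp :: "'w measure \<Rightarrow> (real \<Rightarrow> 'w \<Rightarrow> real) \<Rightarrow> (real \<Rightarrow> real)
                        \<Rightarrow> real \<Rightarrow> real \<Rightarrow> real \<Rightarrow> nat \<Rightarrow> ennreal" where
  "mise_fp M X f delta h x0 n =
     (\<integral>\<^sup>+ \<omega>. (\<integral>\<^sup>+ x. ennreal ((fp_est X delta h x0 n \<omega> x - f x)\<^sup>2) \<partial>lborel) \<partial>M)"

end

theory Submission
  imports Defs "HOL-Real_Asymp.Real_Asymp"
begin

lemma powr_step:
  fixes r :: real and m :: nat
  assumes r: "0 < r" "r < 1" and m: "m \<ge> 1"
  shows "r * real m powr (r - 1) \<le> real m powr r - real (m - 1) powr r"
proof (cases "m = 1")
  case True then show ?thesis using r by simp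
next
  case False
  then have m2: "m \<ge> 2" using m by simp
  define x where "x = real (m - 1) / real m"
  have xpos: "x > 0" using m2 by (simp add: x_def)
  have "x powr r * 1 powr (1 - r) \<le> r * x + (1 - r) * 1"
    using Youngs_inequality_0[of r "1 - r" x 1] r xpos by simp
  then have a: "x powr r \<le> r * x + (1 - r)" by simp
  have "real (m - 1) powr r = x powr r * real m powr r"
    using m2 by (simp add: x_def powr_divide)
  also have "\<dots> \<le> (r * x + (1 - r)) * real m powr r"
    using a by (intro mult_right_mono) auto
  also have "\<dots> = real m powr r - r * (real m powr r / real m)"
    using m2 by (simp add: x_def of_nat_diff field_simps)
  also have "real m powr r / real m = real m powr (r - 1)"
    using m2 by (simp add: powr_diff)
  finally show ?thesis by simp
qed

lemma sum_powr_bound: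
  fixes \<gamma> :: real
  assumes "0 < \<gamma>" "\<gamma> < 1"
  shows "(\<Sum>m=1..N. real m powr (-\<gamma>)) \<le> real N powr (1 - \<gamma>) / (1 - \<gamma>)"
proof (induction N)
  case 0 then show ?case using assms by simp
next
  case (Suc N)
  have "(1 - \<gamma>) * real (Suc N) powr (-\<gamma>) \<le> real (Suc N) powr (1 - \<gamma>) - real N powr (1 - \<gamma>)"
    using powr_step[of "1 - \<gamma>" "Suc N"] assms by simp
  then have "real (Suc N) powr (-\<gamma>) \<le> (real (Suc N) powr (1 - \<gamma>) - real N powr (1 - \<gamma>)) / (1 - \<gamma>)"
    using assms by (simp add: field_simps)
  with Suc show ?case by (simp add: diff_divide_distrib)
qed

lemma sum_harm_bound:
  assumes "N \<ge> 1"
  shows "(\<Sum>m=1..N. 1 / real m) \<le> 1 + ln (real N)"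
  using assms
proof (induction N rule: dec_induct)
  case base then show ?case by simp
next
  case (step N)
  have "ln (real N / real (Suc N)) \<le> real N / real (Suc N) - 1"
    using step by (intro ln_le_minus_one) auto
  also have "\<dots> = - 1 / real (Suc N)" by (simp add: field_simps)
  finally have "1 / real (Suc N) \<le> ln (real (Suc N)) - ln (real N)"
    using step by (simp add: ln_div)
  with step show ?case by simp
qed

lemma bin_iff:
  fixes h a x :: real and j :: int
  assumes h: "h > 0"
  shows "x \<in> {a + real_of_int j * h ..< a + (real_of_int j + 1) * h} \<longleftrightarrow> j = \<lfloor>(x - a) / h\<rfloor>"
proof -
  have "x \<in> {a + real_of_int j * h ..< a + (real_of_int j + 1) * h} \<longleftrightarrow>
        real_of_int j \<le> (x - a) / h \<and> (x - a) / h < real_of_int j + 1"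
    using h by (auto simp: field_simps)
  also have "\<dots> \<longleftrightarrow> j = \<lfloor>(x - a) / h\<rfloor>" by (metis floor_eq_iff)
  finally show ?thesis .
qed

lemma partition_nn:
  fixes G :: "int \<Rightarrow> real \<Rightarrow> ennreal"
  assumes h: "h > 0" and meas: "\<And>j. G j \<in> borel_measurable lborel"
  shows "(\<integral>\<^sup>+ x. G \<lfloor>(x - a) / h\<rfloor> x \<partial>lborel) =
         (\<integral>\<^sup>+ j. \<integral>\<^sup>+ x. G j x * indicator {a + real_of_int j * h ..< a + (real_of_int j + 1) * h} x \<partial>lborel \<partial>count_space UNIV)"
proof -
  have "\<And>x. (\<integral>\<^sup>+ j. G j x * indicator {a + real_of_int j * h ..< a + (real_of_int j + 1) * h} x \<partial>count_space UNIV)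
         = G \<lfloor>(x - a) / h\<rfloor> x"
  proof -
    fix x
    have "(\<lambda>j. G j x * indicator {a + real_of_int j * h ..< a + (real_of_int j + 1) * h} x)
          = (\<lambda>j. G \<lfloor>(x - a) / h\<rfloor> x * indicator {\<lfloor>(x - a) / h\<rfloor>} j)"
      using bin_iff[OF h] by (auto simp: indicator_def)
    then show "?thesis x" by (simp add: nn_integral_cmult_indicator)
  qed
  then have "(\<integral>\<^sup>+ x. G \<lfloor>(x - a) / h\<rfloor> x \<partial>lborel) =
     (\<integral>\<^sup>+ x. \<integral>\<^sup>+ j. G j x * indicator {a + real_of_int j * h ..< a + (real_of_int j + 1) * h} x \<partial>count_space UNIV \<partial>lborel)"
    by simp
  also have "\<dots> = (\<integral>\<^sup>+ j. \<integral>\<^sup>+ x. G j x * indicator {a + real_of_int j * h ..< a + (real_of_int j + 1) * h} x \<partial>lborel \<partial>count_space UNIV)"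
    using meas by (intro nn_integral_count_space_nn_integral) auto
  finally show ?thesis .
qed

lemma deriv_diff_bound:
  fixes f1 f2 :: "real \<Rightarrow> real"
  assumes d2f: "\<And>x. (f1 has_real_derivative f2 x) (at x)"
    and f2c: "continuous_on UNIV f2"
    and ab: "a \<le> b"
  shows "\<bar>f1 b - f1 a\<bar> \<le> integral {a..b} (\<lambda>t. \<bar>f2 t\<bar>)"
proof -
  have "(f2 has_integral (f1 b - f1 a)) {a..b}"
    using ab d2f by (intro fundamental_theorem_of_calculus)
      (auto simp: has_real_derivative_iff_has_vector_derivative[symmetric] intro: has_field_derivative_at_within)
  then have "f1 b - f1 a = integral {a..b} f2" by (simp add: integral_unique)
  moreover have "norm (integral {a..b} f2) \<le> integral {a..b} (\<lambda>t. \<bar>f2 t\<bar>)"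
    by (intro integral_norm_bound_integral integrable_continuous_real continuous_on_subset[OF f2c]
        continuous_on_rabs) auto
  ultimately show ?thesis by simp
qed

lemma int_abs_mono:
  fixes f2 :: "real \<Rightarrow> real"
  assumes f2c: "continuous_on UNIV f2" and "{a..b} \<subseteq> {c..d}"
  shows "integral {a..b} (\<lambda>t. \<bar>f2 t\<bar>) \<le> integral {c..d} (\<lambda>t. \<bar>f2 t\<bar>)"
  using assms
  by (intro integral_subset_le integrable_continuous_real continuous_on_rabs continuous_on_subset[OF f2c]) auto

lemma taylor1_bound:
  fixes f f1 f2 :: "real \<Rightarrow> real"
  assumes d1f: "\<And>x. (f has_real_derivative f1 x) (at x)"
    and d2f: "\<And>x. (f1 has_real_derivative f2 x) (at x)"
    and f2c: "continuous_on UNIV f2"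
    and y: "\<bar>y - x\<bar> \<le> 2 * h"
  shows "\<bar>f y - f x - f1 x * (y - x)\<bar> \<le> \<bar>y - x\<bar> * integral {x - 2*h..x + 2*h} (\<lambda>t. \<bar>f2 t\<bar>)"
proof -
  let ?G = "integral {x - 2*h..x + 2*h} (\<lambda>t. \<bar>f2 t\<bar>)"
  have key: "\<bar>f1 s - f1 x\<bar> \<le> ?G" if "\<bar>s - x\<bar> \<le> 2 * h" for s
  proof (cases "x \<le> s")
    case True
    then have "\<bar>f1 s - f1 x\<bar> \<le> integral {x..s} (\<lambda>t. \<bar>f2 t\<bar>)"
      by (intro deriv_diff_bound[OF d2f f2c])
    also have "\<dots> \<le> ?G" using that True by (intro int_abs_mono[OF f2c]) auto
    finally show ?thesis .
  next
    case False
    then have "\<bar>f1 x - f1 s\<bar> \<le> integral {s..x} (\<lambda>t. \<bar>f2 t\<bar>)"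
      by (intro deriv_diff_bound[OF d2f f2c]) auto
    also have "\<dots> \<le> ?G" using that False by (intro int_abs_mono[OF f2c]) auto
    finally show ?thesis by simp
  qed
  define g where "g s = f s - f1 x * s" for s
  have dg: "DERIV g s :> f1 s - f1 x" for s
    unfolding g_def by (auto intro!: derivative_eq_intros d1f)
  show ?thesis
  proof (cases "y = x")
    case True then show ?thesis by simp
  next
    case False
    have "\<exists>z. min x y < z \<and> z < max x y \<and> g (max x y) - g (min x y) = (max x y - min x y) * (f1 z - f1 x)"
      using False by (intro MVT2 dg) auto
    then obtain z where z: "min x y < z" "z < max x y"
      and eq: "g (max x y) - g (min x y) = (max x y - min x y) * (f1 z - f1 x)" by blast
    have "\<bar>f y - f x - f1 x * (y - x)\<bar> = \<bar>g y - g x\<bar>" by (simp add: g_def algebra_simps)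
    also have "\<dots> = \<bar>y - x\<bar> * \<bar>f1 z - f1 x\<bar>"
      using eq by (cases "x \<le> y") (auto simp: abs_mult max_def min_def abs_minus_commute[of "g y"])
    also have "\<dots> \<le> \<bar>y - x\<bar> * ?G"
      using z y by (intro mult_left_mono key) auto
    finally show ?thesis .
  qed
qed

lemma bin_avg_bound:
  fixes f f1 f2 :: "real \<Rightarrow> real"
  assumes d1f: "\<And>x. (f has_real_derivative f1 x) (at x)"
    and d2f: "\<And>x. (f1 has_real_derivative f2 x) (at x)"
    and f2c: "continuous_on UNIV f2"
    and h: "h > 0" and b1: "x - 2*h \<le> b" and b2: "b + h \<le> x + 2*h"
  shows "\<bar>integral {b..b+h} f / h - f x - f1 x * (b + h/2 - x)\<bar>
          \<le> 2 * h * integral {x - 2*h..x + 2*h} (\<lambda>t. \<bar>f2 t\<bar>)"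
proof -
  let ?G = "integral {x - 2*h..x + 2*h} (\<lambda>t. \<bar>f2 t\<bar>)"
  have fc: "continuous_on UNIV f"
    using d1f by (meson DERIV_isCont continuous_at_imp_continuous_on)
  have lin: "((\<lambda>y. y - x) has_integral (h * (b + h/2 - x))) {b..b+h}"
  proof -
    have "((\<lambda>y. y - x) has_integral ((b + h - x)^2/2 - (b - x)^2/2)) {b..b+h}"
      using h by (intro fundamental_theorem_of_calculus)
        (auto simp: has_real_derivative_iff_has_vector_derivative[symmetric] intro!: derivative_eq_intros)
    moreover have "(b + h - x)^2/2 - (b - x)^2/2 = h * (b + h/2 - x)"
      by (simp add: power2_eq_square field_simps)
    ultimately show ?thesis by simp
  qed
  have fi: "(f has_integral integral {b..b+h} f) {b..b+h}"
    by (intro integrable_integral integrable_continuous_real continuous_on_subset[OF fc]) auto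
  have R: "((\<lambda>y. f y - f x - f1 x * (y - x)) has_integral
            (integral {b..b+h} f - h * f x - f1 x * (h * (b + h/2 - x)))) {b..b+h}"
    using h by (intro has_integral_diff fi has_integral_mult_right lin)
      (use has_integral_const_real[of "f x" b "b+h"] in auto)
  have "norm (integral {b..b+h} f - h * f x - f1 x * (h * (b + h/2 - x)))
        \<le> integral {b..b+h} (\<lambda>y. 2 * h * ?G)"
  proof -
    have "norm (integral {b..b+h} (\<lambda>y. f y - f x - f1 x * (y - x))) \<le> integral {b..b+h} (\<lambda>y. 2 * h * ?G)"
    proof (intro integral_norm_bound_integral)
      show "(\<lambda>y. f y - f x - f1 x * (y - x)) integrable_on {b..b+h}" using R by blast
      show "(\<lambda>y. 2 * h * ?G) integrable_on {b..b+h}" by (rule integrable_const_ivl)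
      fix y assume y: "y \<in> {b..b+h}"
      then have yx: "\<bar>y - x\<bar> \<le> 2 * h" using b1 b2 by auto
      have G0: "0 \<le> ?G" by (intro integral_nonneg integrable_continuous_real continuous_on_rabs
          continuous_on_subset[OF f2c]) auto
      have "\<bar>f y - f x - f1 x * (y - x)\<bar> \<le> \<bar>y - x\<bar> * ?G"
        by (rule taylor1_bound[OF d1f d2f f2c yx])
      also have "\<dots> \<le> 2 * h * ?G" using yx G0 by (intro mult_right_mono) auto
      finally show "norm (f y - f x - f1 x * (y - x)) \<le> 2 * h * ?G" by simp
    qed
    then show ?thesis using R by (simp add: integral_unique)
  qed
  also have "\<dots> = h * (2 * h * ?G)" using h by simp
  finally have "\<bar>integral {b..b+h} f - h * f x - f1 x * (h * (b + h/2 - x))\<bar> \<le> h * (2 * h * ?G)"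
    by simp
  moreover have "integral {b..b+h} f / h - f x - f1 x * (b + h/2 - x)
      = (integral {b..b+h} f - h * f x - f1 x * (h * (b + h/2 - x))) / h"
    using h by (simp add: field_simps)
  ultimately show ?thesis using h by (simp add: abs_divide divide_le_eq mult.commute)
qed

lemma cs_interval:
  fixes g :: "real \<Rightarrow> real"
  assumes gc: "continuous_on UNIV g" and ab: "a < b"
  shows "(integral {a..b} (\<lambda>t. \<bar>g t\<bar>))^2 \<le> (b - a) * integral {a..b} (\<lambda>t. (g t)^2)"
proof -
  define I where "I = integral {a..b} (\<lambda>t. \<bar>g t\<bar>)"
  define Q where "Q = integral {a..b} (\<lambda>t. (g t)^2)"
  define L where "L = b - a"
  have L: "L > 0" using ab by (simp add: L_def)
  have c1: "continuous_on {a..b} (\<lambda>t. \<bar>g t\<bar>)" by (intro continuous_on_rabs continuous_on_subset[OF gc]) auto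
  have c2: "continuous_on {a..b} (\<lambda>t. (g t)^2)" by (intro continuous_intros continuous_on_subset[OF gc]) auto
  have i1: "((\<lambda>t. \<bar>g t\<bar>) has_integral I) {a..b}" unfolding I_def
    by (intro integrable_integral integrable_continuous_real c1)
  have i2: "((\<lambda>t. (g t)^2) has_integral Q) {a..b}" unfolding Q_def
    by (intro integrable_integral integrable_continuous_real c2)
  have i3: "((\<lambda>t. (g t)^2 - 2 * (I / L) * \<bar>g t\<bar> + (I/L)^2) has_integral (Q - 2 * (I/L) * I + (I/L)^2 * L)) {a..b}"
    using ab by (intro has_integral_add has_integral_diff i2 has_integral_mult_right i1)
      (use has_integral_const_real[of "(I/L)^2" a b] in \<open>auto simp: L_def mult.commute\<close>)
  have "0 \<le> Q - 2 * (I/L) * I + (I/L)^2 * L"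
  proof (rule has_integral_nonneg[OF i3])
    fix t
    have "(g t)^2 - 2 * (I / L) * \<bar>g t\<bar> + (I/L)^2 = (\<bar>g t\<bar> - I/L)^2"
      by (simp add: power2_eq_square algebra_simps)
    then show "0 \<le> (g t)^2 - 2 * (I / L) * \<bar>g t\<bar> + (I/L)^2" by simp
  qed
  also have "Q - 2 * (I/L) * I + (I/L)^2 * L = Q - I^2 / L"
    using L by (simp add: power2_eq_square field_simps)
  finally have "I^2 / L \<le> Q" by simp
  then show ?thesis using L by (simp add: I_def Q_def L_def[symmetric] divide_le_eq mult.commute)
qed

lemma window_integral:
  fixes q :: "real \<Rightarrow> real"
  assumes qc: "continuous_on UNIV q" and q0: "\<And>t. q t \<ge> 0" and h: "h > 0"
  shows "(\<integral>\<^sup>+ x. ennreal (integral {x - 2*h..x + 2*h} q) \<partial>lborel) = ennreal (4 * h) * (\<integral>\<^sup>+ t. ennreal (q t) \<partial>lborel)"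
proof -
  have qm[measurable]: "q \<in> borel_measurable borel" using qc by (intro borel_measurable_continuous_onI) auto
  have "\<And>x. ennreal (integral {x - 2*h..x + 2*h} q) = (\<integral>\<^sup>+ t. ennreal (q t) * indicator {x - 2*h..x + 2*h} t \<partial>lborel)"
    by (rule nn_integral_has_integral_lebesgue'[symmetric]) 
       (auto intro!: q0 integrable_integral integrable_continuous_real continuous_on_subset[OF qc])
  then have "(\<integral>\<^sup>+ x. ennreal (integral {x - 2*h..x + 2*h} q) \<partial>lborel) =
     (\<integral>\<^sup>+ x. \<integral>\<^sup>+ t. ennreal (q t) * indicator {x - 2*h..x + 2*h} t \<partial>lborel \<partial>lborel)" by simp
  also have "\<dots> = (\<integral>\<^sup>+ t. \<integral>\<^sup>+ x. ennreal (q t) * indicator {x - 2*h..x + 2*h} t \<partial>lborel \<partial>lborel)"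
  proof (rule lborel_pair.Fubini'[symmetric])
    define S where "S = {p \<in> space (lborel \<Otimes>\<^sub>M lborel). fst p - 2*h \<le> snd p \<and> snd p \<le> fst p + 2*h}"
    have [measurable]: "S \<in> sets (lborel \<Otimes>\<^sub>M lborel)" unfolding S_def by measurable
    have "(\<lambda>(x, t). ennreal (q t) * indicator {x - 2*h..x + 2*h} t) = (\<lambda>p. ennreal (q (snd p)) * indicator S p)"
      by (auto simp: S_def indicator_def fun_eq_iff space_pair_measure)
    moreover have "(\<lambda>p. ennreal (q (snd p)) * indicator S p) \<in> borel_measurable (lborel \<Otimes>\<^sub>M lborel)"
      by measurable
    ultimately show "(\<lambda>(x, t). ennreal (q t) * indicator {x - 2*h..x + 2*h} t) \<in> borel_measurable (lborel \<Otimes>\<^sub>M lborel)"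
      by simp
  qed
  also have "\<dots> = (\<integral>\<^sup>+ t. ennreal (q t) * ennreal (4 * h) \<partial>lborel)"
  proof (rule nn_integral_cong)
    fix t
    have "(\<lambda>x. ennreal (q t) * indicator {x - 2*h..x + 2*h} t) = (\<lambda>x. ennreal (q t) * indicator {t - 2*h..t + 2*h} x)"
      by (intro ext) (smt (verit) indicator_simps(1) indicator_simps(2) atLeastAtMost_iff)
    then show "(\<integral>\<^sup>+ x. ennreal (q t) * indicator {x - 2*h..x + 2*h} t \<partial>lborel) = ennreal (q t) * ennreal (4 * h)"
      using h by (simp add: nn_integral_cmult_indicator)
  qed
  also have "\<dots> = ennreal (4 * h) * (\<integral>\<^sup>+ t. ennreal (q t) \<partial>lborel)"
    by (subst nn_integral_multc) (auto simp: mult.commute)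
  finally show ?thesis .
qed

locale fp_setting = prob_space M for M :: "'w measure" +
  fixes X :: "real \<Rightarrow> 'w \<Rightarrow> real" and f :: "real \<Rightarrow> real" and fu :: "real \<Rightarrow> real \<Rightarrow> real \<Rightarrow> real"
    and \<phi> k \<pi> :: "real \<Rightarrow> real" and \<gamma>0 u0 :: real
  assumes f_nonneg: "\<And>x. f x \<ge> 0"
    and dens: "\<And>t. distributed M lborel (X t) (\<lambda>x. ennreal (f x))"
    and fu_nonneg: "\<And>u y z. u > 0 \<Longrightarrow> fu u y z \<ge> 0"
    and joint: "\<And>s t. s \<noteq> t \<Longrightarrow>
        distributed M (lborel \<Otimes>\<^sub>M lborel) (\<lambda>\<omega>. (X s \<omega>, X t \<omega>))
          (\<lambda>(y, z). ennreal (fu \<bar>t - s\<bar> y z))"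
    and \<phi>_pos: "\<And>y. \<phi> y > 0" and \<phi>_cont: "continuous_on UNIV \<phi>"
    and \<phi>_int: "integrable lborel \<phi>"
    and A1i: "\<And>u y z. 0 < u \<Longrightarrow> u \<le> u0 \<Longrightarrow> fu u y z \<le> \<phi> y * u powr (- \<gamma>0)"
    and k_pos: "\<And>y. k y > 0" and k_cont: "continuous_on UNIV k"
    and k_int: "integrable lborel k"
    and A1ii: "\<And>u y z. u \<ge> u0 \<Longrightarrow> \<bar>fu u y z - f y * f z\<bar> \<le> k y * \<pi> u"
begin

lemma X_meas[measurable]: "X t \<in> borel_measurable M"
  using distributed_measurable[OF dens[of t]] by simp

lemma f_meas[measurable]: "f \<in> borel_measurable borel"
  using distributed_real_measurable[OF _ dens[of 0]] f_nonneg by simp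

lemma \<phi>_meas[measurable]: "\<phi> \<in> borel_measurable borel"
  using \<phi>_cont by (intro borel_measurable_continuous_onI) auto

lemma k_meas[measurable]: "k \<in> borel_measurable borel"
  using k_cont by (intro borel_measurable_continuous_onI) auto

definition PB :: "real set \<Rightarrow> real" where
  "PB B = enn2real (\<integral>\<^sup>+ y. ennreal (f y) * indicator B y \<partial>lborel)"
definition PhiB :: "real set \<Rightarrow> real" where
  "PhiB B = enn2real (\<integral>\<^sup>+ y. ennreal (\<phi> y) * indicator B y \<partial>lborel)"
definition KB :: "real set \<Rightarrow> real" where
  "KB B = enn2real (\<integral>\<^sup>+ y. ennreal (k y) * indicator B y \<partial>lborel)"

lemma f_total: "(\<integral>\<^sup>+ y. ennreal (f y) \<partial>lborel) = 1"
proof -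
  have "emeasure M (X 0 -` UNIV \<inter> space M) = (\<integral>\<^sup>+ y. ennreal (f y) * indicator UNIV y \<partial>lborel)"
    by (rule distributed_emeasure[OF dens]) simp
  then show ?thesis by (simp add: emeasure_space_1)
qed

lemma PB_eq: "B \<in> sets borel \<Longrightarrow> (\<integral>\<^sup>+ y. ennreal (f y) * indicator B y \<partial>lborel) = ennreal (PB B)"
proof -
  assume [measurable]: "B \<in> sets borel"
  have le1: "(\<integral>\<^sup>+ y. ennreal (f y) * indicator B y \<partial>lborel) \<le> (\<integral>\<^sup>+ y. ennreal (f y) \<partial>lborel)"
    by (intro nn_integral_mono) (auto simp: indicator_def)
  have "(\<integral>\<^sup>+ y. ennreal (f y) * indicator B y \<partial>lborel) < \<infinity>" using le_less_trans[OF le1[unfolded f_total] ennreal_one_less_top] by simp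
  then show ?thesis unfolding PB_def by (simp add: less_top)
qed

lemma PhiB_eq: "B \<in> sets borel \<Longrightarrow> (\<integral>\<^sup>+ y. ennreal (\<phi> y) * indicator B y \<partial>lborel) = ennreal (PhiB B)"
proof -
  assume [measurable]: "B \<in> sets borel"
  have "(\<integral>\<^sup>+ y. ennreal (\<phi> y) * indicator B y \<partial>lborel) \<le> (\<integral>\<^sup>+ y. ennreal (\<phi> y) \<partial>lborel)"
    by (intro nn_integral_mono) (auto simp: indicator_def)
  moreover have "(\<integral>\<^sup>+ y. ennreal (\<phi> y) \<partial>lborel) < \<infinity>"
    using \<phi>_int \<phi>_pos by (simp add: integrable_iff_bounded less_imp_le)
  ultimately have "(\<integral>\<^sup>+ y. ennreal (\<phi> y) * indicator B y \<partial>lborel) < \<infinity>" by (meson le_less_trans)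
  then show ?thesis unfolding PhiB_def by (simp add: less_top)
qed

lemma KB_eq: "B \<in> sets borel \<Longrightarrow> (\<integral>\<^sup>+ y. ennreal (k y) * indicator B y \<partial>lborel) = ennreal (KB B)"
proof -
  assume [measurable]: "B \<in> sets borel"
  have "(\<integral>\<^sup>+ y. ennreal (k y) * indicator B y \<partial>lborel) \<le> (\<integral>\<^sup>+ y. ennreal (k y) \<partial>lborel)"
    by (intro nn_integral_mono) (auto simp: indicator_def)
  moreover have "(\<integral>\<^sup>+ y. ennreal (k y) \<partial>lborel) < \<infinity>"
    using k_int k_pos by (simp add: integrable_iff_bounded less_imp_le)
  ultimately have "(\<integral>\<^sup>+ y. ennreal (k y) * indicator B y \<partial>lborel) < \<infinity>" by (meson le_less_trans)
  then show ?thesis unfolding KB_def by (simp add: less_top)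
qed

lemma mean_ind:
  assumes [measurable]: "B \<in> sets borel"
  shows "integrable M (\<lambda>\<omega>. indicator B (X t \<omega>) :: real)"
    and "(\<integral>\<omega>. indicator B (X t \<omega>) \<partial>M) = PB B"
proof -
  have "(\<integral>\<^sup>+ \<omega>. ennreal (indicator B (X t \<omega>)) \<partial>M) = (\<integral>\<^sup>+ y. ennreal (f y) * indicator B y \<partial>lborel)"
    by (subst distributed_nn_integral[OF dens, symmetric]) (auto simp: indicator_def intro!: nn_integral_cong)
  also have "\<dots> = ennreal (PB B)" by (rule PB_eq) simp
  finally have "(\<integral>\<^sup>+ \<omega>. ennreal (indicator B (X t \<omega>)) \<partial>M) = ennreal (PB B)" .
  then have "integrable M (\<lambda>\<omega>. indicator B (X t \<omega>) :: real) \<and> (\<integral>\<omega>. indicator B (X t \<omega>) \<partial>M) = PB B"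
    by (subst nn_integral_eq_integrable[symmetric]) (auto simp: PB_def)
  then show "integrable M (\<lambda>\<omega>. indicator B (X t \<omega>) :: real)" "(\<integral>\<omega>. indicator B (X t \<omega>) \<partial>M) = PB B" by auto
qed

end

context fp_setting begin

lemma prod_ind_integrable:
  assumes [measurable]: "B \<in> sets borel"
  shows "integrable M (\<lambda>\<omega>. indicator B (X s \<omega>) * indicator B (X t \<omega>) :: real)"
  by (rule integrable_const_bound[where B=1]) (auto simp: indicator_def)

lemma pair_nn:
  assumes [measurable]: "B \<in> sets borel" and st: "s \<noteq> t"
  shows "(\<integral>\<^sup>+\<omega>. ennreal (indicator B (X s \<omega>) * indicator B (X t \<omega>)) \<partial>M)
       = (\<integral>\<^sup>+p. (\<lambda>(y, z). ennreal (fu \<bar>t - s\<bar> y z)) p * indicator (B \<times> B) p \<partial>(lborel \<Otimes>\<^sub>M lborel))"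
  by (subst distributed_nn_integral[OF joint[OF st]]) (auto simp: indicator_def intro!: nn_integral_cong)

lemma prod_nn_fst:
  fixes g1 g2 :: "real \<Rightarrow> ennreal"
  assumes [measurable]: "g1 \<in> borel_measurable borel" "g2 \<in> borel_measurable borel" "B \<in> sets borel"
  shows "(\<integral>\<^sup>+p. g1 (fst p) * g2 (snd p) * indicator (B \<times> B) p \<partial>(lborel \<Otimes>\<^sub>M lborel))
       = (\<integral>\<^sup>+y. g1 y * indicator B y \<partial>lborel) * (\<integral>\<^sup>+z. g2 z * indicator B z \<partial>lborel)"
proof -
  have "(\<integral>\<^sup>+p. g1 (fst p) * g2 (snd p) * indicator (B \<times> B) p \<partial>(lborel \<Otimes>\<^sub>M lborel))
      = (\<integral>\<^sup>+y. \<integral>\<^sup>+z. g1 y * g2 z * indicator (B \<times> B) (y, z) \<partial>lborel \<partial>lborel)"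
    by (subst lborel.nn_integral_fst[symmetric]) auto
  also have "\<dots> = (\<integral>\<^sup>+y. (g1 y * indicator B y) * (\<integral>\<^sup>+z. g2 z * indicator B z \<partial>lborel) \<partial>lborel)"
    by (intro nn_integral_cong) (auto simp: indicator_def nn_integral_cmult[symmetric] mult_ac intro!: nn_integral_cong)
  also have "\<dots> = (\<integral>\<^sup>+y. g1 y * indicator B y \<partial>lborel) * (\<integral>\<^sup>+z. g2 z * indicator B z \<partial>lborel)"
    by (rule nn_integral_multc) auto
  finally show ?thesis .
qed

end

context fp_setting begin

lemma pi_nonneg: "u \<ge> u0 \<Longrightarrow> \<pi> u \<ge> 0"
  using A1ii[of u 0 0] k_pos[of 0] by (smt (verit) zero_le_mult_iff)

lemma fu_meas[measurable]: "u > 0 \<Longrightarrow> (\<lambda>(y, z). ennreal (fu u y z)) \<in> borel_measurable (lborel \<Otimes>\<^sub>M lborel)"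
  using distributed_borel_measurable[OF joint[of 0 u]] by simp

lemma cov_near:
  assumes st: "s \<noteq> t" and u: "\<bar>t - s\<bar> \<le> u0" and h: "h > 0"
  shows "(\<integral>\<omega>. indicator {b..<b+h} (X s \<omega>) * indicator {b..<b+h} (X t \<omega>) \<partial>M)
         \<le> h * \<bar>t - s\<bar> powr (-\<gamma>0) * PhiB {b..<b+h}"
proof -
  let ?B = "{b..<b+h}" let ?u = "\<bar>t - s\<bar>"
  have upos: "?u > 0" using st by simp
  have "ennreal (\<integral>\<omega>. indicator ?B (X s \<omega>) * indicator ?B (X t \<omega>) \<partial>M)
      = (\<integral>\<^sup>+\<omega>. ennreal (indicator ?B (X s \<omega>) * indicator ?B (X t \<omega>)) \<partial>M)"
    by (rule nn_integral_eq_integral[symmetric]) (auto intro!: prod_ind_integrable)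
  also have "\<dots> = (\<integral>\<^sup>+p. (\<lambda>(y, z). ennreal (fu ?u y z)) p * indicator (?B \<times> ?B) p \<partial>(lborel \<Otimes>\<^sub>M lborel))"
    by (rule pair_nn[OF _ st]) simp
  also have "\<dots> \<le> (\<integral>\<^sup>+p. ennreal (\<phi> (fst p) * ?u powr (-\<gamma>0)) * ennreal 1 * indicator (?B \<times> ?B) p \<partial>(lborel \<Otimes>\<^sub>M lborel))"
    by (intro nn_integral_mono) (auto simp: indicator_def intro!: ennreal_leI A1i upos u)
  also have "\<dots> = (\<integral>\<^sup>+y. ennreal (\<phi> y * ?u powr (-\<gamma>0)) * indicator ?B y \<partial>lborel) * (\<integral>\<^sup>+z. ennreal 1 * indicator ?B z \<partial>lborel)"
    by (rule prod_nn_fst) auto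
  also have "(\<integral>\<^sup>+z. ennreal 1 * indicator ?B z \<partial>lborel) = ennreal h" using h by simp
  also have "(\<integral>\<^sup>+y. ennreal (\<phi> y * ?u powr (-\<gamma>0)) * indicator ?B y \<partial>lborel)
      = ennreal (?u powr (-\<gamma>0)) * (\<integral>\<^sup>+y. ennreal (\<phi> y) * indicator ?B y \<partial>lborel)"
    using \<phi>_pos by (subst nn_integral_cmult[symmetric]) (auto simp: ennreal_mult less_imp_le mult_ac)
  also have "(\<integral>\<^sup>+y. ennreal (\<phi> y) * indicator ?B y \<partial>lborel) = ennreal (PhiB ?B)"
    by (rule PhiB_eq) simp
  finally have "ennreal (\<integral>\<omega>. indicator ?B (X s \<omega>) * indicator ?B (X t \<omega>) \<partial>M)
      \<le> ennreal (h * ?u powr (-\<gamma>0) * PhiB ?B)"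
    using h by (simp add: ennreal_mult PhiB_def mult_ac)
  moreover have "0 \<le> h * ?u powr (-\<gamma>0) * PhiB ?B" using h by (simp add: PhiB_def)
  ultimately show ?thesis by (simp add: ennreal_le_iff)
qed

lemma cov_far:
  assumes st: "s \<noteq> t" and u: "\<bar>t - s\<bar> \<ge> u0" and h: "h > 0"
  shows "(\<integral>\<omega>. indicator {b..<b+h} (X s \<omega>) * indicator {b..<b+h} (X t \<omega>) \<partial>M)
         \<le> (PB {b..<b+h})^2 + h * \<pi> \<bar>t - s\<bar> * KB {b..<b+h}"
proof -
  let ?B = "{b..<b+h}" let ?u = "\<bar>t - s\<bar>"
  have upos: "?u > 0" using st by simp
  have pi0: "\<pi> ?u \<ge> 0" using pi_nonneg u by simp
  have "ennreal (\<integral>\<omega>. indicator ?B (X s \<omega>) * indicator ?B (X t \<omega>) \<partial>M)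
      = (\<integral>\<^sup>+\<omega>. ennreal (indicator ?B (X s \<omega>) * indicator ?B (X t \<omega>)) \<partial>M)"
    by (rule nn_integral_eq_integral[symmetric]) (auto intro!: prod_ind_integrable)
  also have "\<dots> = (\<integral>\<^sup>+p. (\<lambda>(y, z). ennreal (fu ?u y z)) p * indicator (?B \<times> ?B) p \<partial>(lborel \<Otimes>\<^sub>M lborel))"
    by (rule pair_nn[OF _ st]) simp
  also have "\<dots> \<le> (\<integral>\<^sup>+p. (ennreal (f (fst p)) * ennreal (f (snd p)) * indicator (?B \<times> ?B) p)
       + (ennreal (k (fst p) * \<pi> ?u) * ennreal 1 * indicator (?B \<times> ?B) p) \<partial>(lborel \<Otimes>\<^sub>M lborel))"
  proof (intro nn_integral_mono)
    fix p :: "real \<times> real"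
    obtain y z where p: "p = (y, z)" by (cases p)
    have "fu ?u y z \<le> f y * f z + k y * \<pi> ?u" using A1ii[OF u, of y z] by simp
    then have "ennreal (fu ?u y z) \<le> ennreal (f y * f z) + ennreal (k y * \<pi> ?u)"
    proof -
      have "0 \<le> k y * \<pi> ?u" using k_pos[of y] pi0 by simp
      moreover have "0 \<le> f y * f z" using f_nonneg by simp
      ultimately show ?thesis using \<open>fu ?u y z \<le> f y * f z + k y * \<pi> ?u\<close>
        by (simp add: ennreal_plus[symmetric] ennreal_leI del: ennreal_plus)
    qed
    then show "(\<lambda>(y, z). ennreal (fu ?u y z)) p * indicator (?B \<times> ?B) p
        \<le> ennreal (f (fst p)) * ennreal (f (snd p)) * indicator (?B \<times> ?B) p + ennreal (k (fst p) * \<pi> ?u) * ennreal 1 * indicator (?B \<times> ?B) p"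
      using f_nonneg by (auto simp: p indicator_def ennreal_mult)
  qed
  also have "\<dots> = (\<integral>\<^sup>+p. ennreal (f (fst p)) * ennreal (f (snd p)) * indicator (?B \<times> ?B) p \<partial>(lborel \<Otimes>\<^sub>M lborel))
       + (\<integral>\<^sup>+p. ennreal (k (fst p) * \<pi> ?u) * ennreal 1 * indicator (?B \<times> ?B) p \<partial>(lborel \<Otimes>\<^sub>M lborel))"
    by (rule nn_integral_add) auto
  also have "(\<integral>\<^sup>+p. ennreal (f (fst p)) * ennreal (f (snd p)) * indicator (?B \<times> ?B) p \<partial>(lborel \<Otimes>\<^sub>M lborel))
      = ennreal (PB ?B) * ennreal (PB ?B)"
    by (subst prod_nn_fst) (auto simp: PB_eq)
  also have "(\<integral>\<^sup>+p. ennreal (k (fst p) * \<pi> ?u) * ennreal 1 * indicator (?B \<times> ?B) p \<partial>(lborel \<Otimes>\<^sub>M lborel))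
      = (\<integral>\<^sup>+y. ennreal (k y * \<pi> ?u) * indicator ?B y \<partial>lborel) * (\<integral>\<^sup>+z. ennreal 1 * indicator ?B z \<partial>lborel)"
    by (rule prod_nn_fst) auto
  also have "(\<integral>\<^sup>+z. ennreal 1 * indicator ?B z \<partial>lborel) = ennreal h" using h by simp
  also have "(\<integral>\<^sup>+y. ennreal (k y * \<pi> ?u) * indicator ?B y \<partial>lborel)
      = ennreal (\<pi> ?u) * (\<integral>\<^sup>+y. ennreal (k y) * indicator ?B y \<partial>lborel)"
    using k_pos pi0 by (subst nn_integral_cmult[symmetric]) (auto simp: ennreal_mult less_imp_le mult_ac)
  also have "(\<integral>\<^sup>+y. ennreal (k y) * indicator ?B y \<partial>lborel) = ennreal (KB ?B)"
    by (rule KB_eq) simp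
  finally have "ennreal (\<integral>\<omega>. indicator ?B (X s \<omega>) * indicator ?B (X t \<omega>) \<partial>M)
      \<le> ennreal ((PB ?B)^2 + h * \<pi> ?u * KB ?B)"
    using h pi0 by (simp add: ennreal_mult PB_def KB_def mult_ac power2_eq_square ennreal_plus)
  moreover have "0 \<le> (PB ?B)^2 + h * \<pi> ?u * KB ?B" using h pi0 by (simp add: KB_def)
  ultimately show ?thesis by (simp add: ennreal_le_iff)
qed

end

lemma pair_sum_bound:
  fixes W :: "nat \<Rightarrow> real"
  assumes W0: "\<And>m. W m \<ge> 0" and k: "k \<in> {1..n}"
  shows "(\<Sum>l\<in>{1..n}-{k}. W (if k \<le> l then l - k else k - l)) \<le> 2 * (\<Sum>m=1..n. W m)"
proof -
  have split: "{1..n}-{k} = {1..<k} \<union> {k<..n}" using k by auto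
  have "(\<Sum>l\<in>{1..n}-{k}. W (if k \<le> l then l - k else k - l))
      = (\<Sum>l\<in>{1..<k}. W (k - l)) + (\<Sum>l\<in>{k<..n}. W (l - k))"
    unfolding split by (subst sum.union_disjoint) (auto intro!: sum.cong)
  also have "(\<Sum>l\<in>{1..<k}. W (k - l)) \<le> (\<Sum>m=1..n. W m)"
  proof -
    have "(\<Sum>l\<in>{1..<k}. W (k - l)) = (\<Sum>m\<in>(\<lambda>l. k - l) ` {1..<k}. W m)"
      by (subst sum.reindex) (auto simp: inj_on_def)
    also have "\<dots> \<le> (\<Sum>m=1..n. W m)"
      using k by (intro sum_mono2) (auto intro: W0)
    finally show ?thesis .
  qed
  also have "(\<Sum>l\<in>{k<..n}. W (l - k)) \<le> (\<Sum>m=1..n. W m)"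
  proof -
    have "(\<Sum>l\<in>{k<..n}. W (l - k)) = (\<Sum>m\<in>(\<lambda>l. l - k) ` {k<..n}. W m)"
      by (subst sum.reindex) (auto simp: inj_on_def)
    also have "\<dots> \<le> (\<Sum>m=1..n. W m)"
      using k by (intro sum_mono2) (auto intro: W0)
    finally show ?thesis .
  qed
  finally show ?thesis by simp
qed

context fp_setting begin

definition S1 :: "real \<Rightarrow> nat \<Rightarrow> real" where
  "S1 \<delta> n = (\<Sum>m=1..n. if real m * \<delta> \<le> u0 then (real m * \<delta>) powr (-\<gamma>0) else 0)"
definition S2 :: "real \<Rightarrow> nat \<Rightarrow> real" where
  "S2 \<delta> n = (\<Sum>m=1..n. if real m * \<delta> \<le> u0 then 0 else \<pi> (real m * \<delta>))"

lemma S1_nonneg: "S1 \<delta> n \<ge> 0" unfolding S1_def by (intro sum_nonneg) auto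
lemma S2_nonneg: "\<delta> > 0 \<Longrightarrow> S2 \<delta> n \<ge> 0" unfolding S2_def by (intro sum_nonneg) (auto intro: pi_nonneg)

lemma var_bin:
  assumes h: "h > 0" and d: "\<delta> > 0" and n: "n \<ge> 1"
  shows "(\<integral>\<omega>. ((1 / (real n * h)) * (\<Sum>k\<in>{1..n}. indicator {b..<b+h} (X (real k * \<delta>) \<omega>)) - PB {b..<b+h} / h)^2 \<partial>M)
    \<le> PB {b..<b+h} / (real n * h^2) + 2 * (PhiB {b..<b+h} * S1 \<delta> n + KB {b..<b+h} * S2 \<delta> n) / (real n * h)"
proof -
  define B where "B = {b..<b+h}"
  have Bm[measurable]: "B \<in> sets borel" by (simp add: B_def)
  define p where "p = PB B"
  define Y where "Y k \<omega> = (indicator B (X (real k * \<delta>) \<omega>) :: real)" for k \<omega>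
  define c where "c k l = (\<integral>\<omega>. (Y k \<omega> - p) * (Y l \<omega> - p) \<partial>M)" for k l
  define W where "W m = h * (if real m * \<delta> \<le> u0 then (real m * \<delta>) powr (-\<gamma>0) * PhiB B else \<pi> (real m * \<delta>) * KB B)" for m :: nat
  define dist where "dist k l = (if k \<le> l then l - k else k - l)" for k l :: nat
  have p0: "p \<ge> 0" by (simp add: p_def PB_def)
  have Yint: "integrable M (Y k)" for k unfolding Y_def by (rule mean_ind(1)) simp
  have EY: "(\<integral>\<omega>. Y k \<omega> \<partial>M) = p" for k unfolding Y_def p_def by (rule mean_ind(2)) simp
  have YYint: "integrable M (\<lambda>\<omega>. Y k \<omega> * Y l \<omega>)" for k l unfolding Y_def by (rule prod_ind_integrable) simp
  have eqp: "(\<lambda>\<omega>. (Y k \<omega> - p) * (Y l \<omega> - p)) = (\<lambda>\<omega>. (Y k \<omega> * Y l \<omega> - p * Y k \<omega>) - (p * Y l \<omega> - p^2))" for k l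
    by (auto simp: algebra_simps power2_eq_square)
  have prodint: "integrable M (\<lambda>\<omega>. (Y k \<omega> - p) * (Y l \<omega> - p))" for k l
    unfolding eqp by (intro Bochner_Integration.integrable_diff integrable_mult_right YYint Yint) simp
  have cexp: "c k l = (\<integral>\<omega>. Y k \<omega> * Y l \<omega> \<partial>M) - p^2" for k l
  proof -
    have eq: "(\<lambda>\<omega>. (Y k \<omega> - p) * (Y l \<omega> - p)) = (\<lambda>\<omega>. (Y k \<omega> * Y l \<omega> - p * Y k \<omega>) - (p * Y l \<omega> - p^2))"
      by (auto simp: algebra_simps power2_eq_square)
    show ?thesis unfolding c_def eq
      using YYint Yint EY prob_space by (simp add: power2_eq_square)
  qed
  have W0: "W m \<ge> 0" for m
    unfolding W_def using h d by (auto simp: PhiB_def KB_def intro!: mult_nonneg_nonneg pi_nonneg)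
  have cbound: "c k l \<le> (if k = l then p else W (dist k l))" if "k \<in> {1..n}" "l \<in> {1..n}" for k l
  proof (cases "k = l")
    case True
    have "(\<lambda>\<omega>. Y k \<omega> * Y k \<omega>) = Y k" by (auto simp: Y_def indicator_def fun_eq_iff)
    then have "c k l = p - p^2" using True cexp EY by simp
    then show ?thesis using True p0 by simp
  next
    case False
    have st: "real k * \<delta> \<noteq> real l * \<delta>" using False d by simp
    have u: "\<bar>real l * \<delta> - real k * \<delta>\<bar> = real (dist k l) * \<delta>"
      using d by (auto simp: dist_def abs_if of_nat_diff algebra_simps)
    show ?thesis
    proof (cases "real (dist k l) * \<delta> \<le> u0")
      case True
      have "(\<integral>\<omega>. Y k \<omega> * Y l \<omega> \<partial>M) \<le> h * \<bar>real l * \<delta> - real k * \<delta>\<bar> powr (-\<gamma>0) * PhiB B"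
        unfolding Y_def B_def by (rule cov_near[OF st _ h]) (use True u in simp)
      then show ?thesis using False True u p0 by (simp add: cexp W_def mult_ac) (smt (verit) zero_le_power2)
    next
      case nt: False
      have "(\<integral>\<omega>. Y k \<omega> * Y l \<omega> \<partial>M) \<le> (PB B)^2 + h * \<pi> \<bar>real l * \<delta> - real k * \<delta>\<bar> * KB B"
        unfolding Y_def B_def by (rule cov_far[OF st _ h]) (use nt u in simp)
      then show ?thesis using False nt u by (simp add: cexp W_def p_def mult_ac)
    qed
  qed
  have SW: "(\<Sum>m=1..n. W m) = h * (PhiB B * S1 \<delta> n + KB B * S2 \<delta> n)"
    unfolding W_def S1_def S2_def
    by (simp add: sum_distrib_left algebra_simps sum.distrib[symmetric]) (intro sum.cong; simp)
  have sumc: "(\<Sum>k\<in>{1..n}. \<Sum>l\<in>{1..n}. c k l) \<le> real n * (p + 2 * (\<Sum>m=1..n. W m))"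
  proof -
    have "(\<Sum>k\<in>{1..n}. \<Sum>l\<in>{1..n}. c k l) \<le> (\<Sum>k\<in>{1..n}. p + 2 * (\<Sum>m=1..n. W m))"
    proof (intro sum_mono)
      fix k assume k: "k \<in> {1..n}"
      have "(\<Sum>l\<in>{1..n}. c k l) = c k k + (\<Sum>l\<in>{1..n}-{k}. c k l)"
        using k by (subst sum.remove[of _ k]) auto
      also have "\<dots> \<le> p + (\<Sum>l\<in>{1..n}-{k}. W (dist k l))"
        using cbound k by (intro add_mono sum_mono) (auto, (smt (verit, best) Suc_le_eq)+)
      also have "(\<Sum>l\<in>{1..n}-{k}. W (dist k l)) \<le> 2 * (\<Sum>m=1..n. W m)"
        unfolding dist_def by (rule pair_sum_bound[OF W0 k])
      finally show "(\<Sum>l\<in>{1..n}. c k l) \<le> p + 2 * (\<Sum>m=1..n. W m)" by simp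
    qed
    then show ?thesis by simp
  qed
  have pt: "((1 / (real n * h)) * (\<Sum>k\<in>{1..n}. Y k \<omega>) - p / h)^2
      = (1 / (real n * h))^2 * (\<Sum>k\<in>{1..n}. \<Sum>l\<in>{1..n}. (Y k \<omega> - p) * (Y l \<omega> - p))" for \<omega>
  proof -
    have "(1 / (real n * h)) * (\<Sum>k\<in>{1..n}. Y k \<omega>) - p / h = (1 / (real n * h)) * (\<Sum>k\<in>{1..n}. (Y k \<omega> - p))"
      using n h by (simp add: sum_subtractf field_simps)
    then show ?thesis by (simp add: power2_eq_square sum_product power_mult_distrib)
  qed
  have "(\<integral>\<omega>. ((1 / (real n * h)) * (\<Sum>k\<in>{1..n}. Y k \<omega>) - p / h)^2 \<partial>M)
      = (1 / (real n * h))^2 * (\<Sum>k\<in>{1..n}. \<Sum>l\<in>{1..n}. c k l)"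
    unfolding pt c_def using prodint by (simp add: integral_sum)
  also have "\<dots> \<le> (1 / (real n * h))^2 * (real n * (p + 2 * (\<Sum>m=1..n. W m)))"
    by (intro mult_left_mono sumc) simp
  also have "\<dots> = p / (real n * h^2) + 2 * (PhiB B * S1 \<delta> n + KB B * S2 \<delta> n) / (real n * h)"
    unfolding SW using n h by (simp add: field_simps power2_eq_square)
  finally show ?thesis unfolding Y_def p_def B_def .
qed

end

lemma bias_pt:
  fixes f f1 f2 :: "real \<Rightarrow> real"
  assumes d1f: "\<And>x. (f has_real_derivative f1 x) (at x)"
    and d2f: "\<And>x. (f1 has_real_derivative f2 x) (at x)"
    and f2c: "continuous_on UNIV f2"
    and h: "h > 0" and c: "c = b + h/2" and x1: "c \<le> x" and x2: "x < c + h"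
  shows "\<bar>((x - c)/h) * (integral {b+h..b+h+h} f / h) + (1 - (x - c)/h) * (integral {b..b+h} f / h) - f x\<bar>
         \<le> 2 * h * integral {x - 2*h..x + 2*h} (\<lambda>t. \<bar>f2 t\<bar>)"
proof -
  let ?G = "integral {x - 2*h..x + 2*h} (\<lambda>t. \<bar>f2 t\<bar>)"
  define l where "l = (x - c)/h"
  have l: "0 \<le> l" "l \<le> 1" using x1 x2 h by (auto simp: l_def field_simps)
  define e0 where "e0 = integral {b..b+h} f / h - f x - f1 x * (b + h/2 - x)"
  define e1 where "e1 = integral {b+h..b+h+h} f / h - f x - f1 x * (b + h + h/2 - x)"
  have e0: "\<bar>e0\<bar> \<le> 2 * h * ?G" unfolding e0_def
    by (rule bin_avg_bound[OF d1f d2f f2c h]) (use x1 x2 c h in auto)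
  have e1: "\<bar>e1\<bar> \<le> 2 * h * ?G" unfolding e1_def
    by (rule bin_avg_bound[OF d1f d2f f2c h]) (use x1 x2 c h in auto)
  have "l * (integral {b+h..b+h+h} f / h) + (1 - l) * (integral {b..b+h} f / h) - f x = l * e1 + (1 - l) * e0"
    unfolding e0_def e1_def l_def c using h by (simp add: field_simps)
  also have "\<bar>l * e1 + (1 - l) * e0\<bar> \<le> l * (2 * h * ?G) + (1 - l) * (2 * h * ?G)"
  proof -
    have "\<bar>l * e1 + (1 - l) * e0\<bar> \<le> \<bar>l * e1\<bar> + \<bar>(1 - l) * e0\<bar>" by (rule abs_triangle_ineq)
    also have "\<dots> = l * \<bar>e1\<bar> + (1 - l) * \<bar>e0\<bar>" using l by (simp add: abs_mult)
    also have "\<dots> \<le> l * (2 * h * ?G) + (1 - l) * (2 * h * ?G)"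
      using l e0 e1 by (intro add_mono mult_left_mono) auto
    finally show ?thesis .
  qed
  also have "\<dots> = 2 * h * ?G" by (simp add: algebra_simps)
  finally show ?thesis unfolding l_def .
qed

lemma sq_convex:
  fixes l u v b :: real
  assumes "0 \<le> l" "l \<le> 1"
  shows "(l * u + (1 - l) * v + b)^2 \<le> 2 * (u^2 + v^2) + 2 * b^2"
proof -
  have "2 * (l * u + (1 - l) * v)^2 + 2 * b^2 - (l * u + (1 - l) * v + b)^2 = (l * u + (1 - l) * v - b)^2"
    by (simp add: power2_eq_square algebra_simps)
  then have "(l * u + (1 - l) * v + b)^2 \<le> 2 * (l * u + (1 - l) * v)^2 + 2 * b^2"
    using zero_le_power2[of "l * u + (1 - l) * v - b"] by linarith
  moreover have "(l * u + (1 - l) * v)^2 = l * u^2 + (1 - l) * v^2 - l * (1 - l) * (u - v)^2"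
    by (simp add: power2_eq_square algebra_simps)
  moreover have "l * (1 - l) * (u - v)^2 \<ge> 0" using assms by simp
  moreover have "l * u^2 + (1 - l) * v^2 \<le> u^2 + v^2"
    using assms by (smt (verit) mult_left_le_one_le zero_le_power2)
  ultimately have "(l * u + (1 - l) * v)^2 \<le> u^2 + v^2" by linarith
  moreover have "\<And>x y z w :: real. x \<le> 2*y + 2*z \<Longrightarrow> y \<le> w \<Longrightarrow> x \<le> 2*w + 2*z" by linarith
  ultimately show ?thesis using \<open>(l * u + (1 - l) * v + b)^2 \<le> 2 * (l * u + (1 - l) * v)^2 + 2 * b^2\<close> by blast
qed

context fp_setting begin

lemma PB_closed:
  assumes h: "h > 0" and fc: "continuous_on UNIV f"
  shows "PB {b..<b+h} = integral {b..b+h} f"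
proof -
  have "(\<integral>\<^sup>+ y. ennreal (f y) * indicator {b..<b+h} y \<partial>lborel) = (\<integral>\<^sup>+ y. ennreal (f y) * indicator {b..b+h} y \<partial>lborel)"
  proof (rule nn_integral_cong_AE)
    show "AE y in lborel. ennreal (f y) * indicator {b..<b+h} y = ennreal (f y) * indicator {b..b+h} y"
      using AE_lborel_singleton[of "b+h"] by eventually_elim (auto simp: indicator_def)
  qed
  also have "\<dots> = ennreal (integral {b..b+h} f)"
    by (rule nn_integral_has_integral_lebesgue') 
       (auto intro!: f_nonneg integrable_integral integrable_continuous_real continuous_on_subset[OF fc])
  moreover have "integral {b..b+h} f \<ge> 0"
    by (intro integral_nonneg integrable_continuous_real continuous_on_subset[OF fc]) (auto simp: f_nonneg)
  ultimately show ?thesis unfolding PB_def by simp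
qed

end

locale fp_full = fp_setting +
  fixes f1 f2 :: "real \<Rightarrow> real"
  assumes d1f: "\<And>x. (f has_real_derivative f1 x) (at x)"
    and d2f: "\<And>x. (f1 has_real_derivative f2 x) (at x)"
    and f2_cont: "continuous_on UNIV f2"
    and f2_L2: "integrable lborel (\<lambda>x. (f2 x)\<^sup>2)"
begin

lemma f_cont: "continuous_on UNIV f"
  using d1f by (meson DERIV_isCont continuous_at_imp_continuous_on)

lemma total_PB:
  assumes h: "h > 0"
  shows "(\<integral>\<^sup>+ j. ennreal (PB {x0 + real_of_int j * h ..< x0 + (real_of_int j + 1) * h}) \<partial>count_space UNIV) = 1"
proof -
  have "(\<integral>\<^sup>+ j. ennreal (PB {x0 + real_of_int j * h ..< x0 + (real_of_int j + 1) * h}) \<partial>count_space UNIV)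
     = (\<integral>\<^sup>+ j. \<integral>\<^sup>+ y. ennreal (f y) * indicator {x0 + real_of_int j * h ..< x0 + (real_of_int j + 1) * h} y \<partial>lborel \<partial>count_space UNIV)"
    by (simp add: PB_eq)
  also have "\<dots> = (\<integral>\<^sup>+ y. ennreal (f y) \<partial>lborel)"
    using partition_nn[OF h, of "\<lambda>j y. ennreal (f y)" x0] by simp
  finally show ?thesis using f_total by simp
qed

lemma total_PhiB:
  assumes h: "h > 0"
  shows "(\<integral>\<^sup>+ j. ennreal (PhiB {x0 + real_of_int j * h ..< x0 + (real_of_int j + 1) * h}) \<partial>count_space UNIV) = ennreal (integral\<^sup>L lborel \<phi>)"
proof -
  have "(\<integral>\<^sup>+ j. ennreal (PhiB {x0 + real_of_int j * h ..< x0 + (real_of_int j + 1) * h}) \<partial>count_space UNIV)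
     = (\<integral>\<^sup>+ j. \<integral>\<^sup>+ y. ennreal (\<phi> y) * indicator {x0 + real_of_int j * h ..< x0 + (real_of_int j + 1) * h} y \<partial>lborel \<partial>count_space UNIV)"
    by (simp add: PhiB_eq)
  also have "\<dots> = (\<integral>\<^sup>+ y. ennreal (\<phi> y) \<partial>lborel)"
    using partition_nn[OF h, of "\<lambda>j y. ennreal (\<phi> y)" x0] by simp
  also have "\<dots> = ennreal (integral\<^sup>L lborel \<phi>)"
    using \<phi>_int \<phi>_pos by (intro nn_integral_eq_integral) (auto intro: less_imp_le)
  finally show ?thesis .
qed

lemma total_KB:
  assumes h: "h > 0"
  shows "(\<integral>\<^sup>+ j. ennreal (KB {x0 + real_of_int j * h ..< x0 + (real_of_int j + 1) * h}) \<partial>count_space UNIV) = ennreal (integral\<^sup>L lborel k)"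
proof -
  have "(\<integral>\<^sup>+ j. ennreal (KB {x0 + real_of_int j * h ..< x0 + (real_of_int j + 1) * h}) \<partial>count_space UNIV)
     = (\<integral>\<^sup>+ j. \<integral>\<^sup>+ y. ennreal (k y) * indicator {x0 + real_of_int j * h ..< x0 + (real_of_int j + 1) * h} y \<partial>lborel \<partial>count_space UNIV)"
    by (simp add: KB_eq)
  also have "\<dots> = (\<integral>\<^sup>+ y. ennreal (k y) \<partial>lborel)"
    using partition_nn[OF h, of "\<lambda>j y. ennreal (k y)" x0] by simp
  also have "\<dots> = ennreal (integral\<^sup>L lborel k)"
    using k_int k_pos by (intro nn_integral_eq_integral) (auto intro: less_imp_le)
  finally show ?thesis .
qed

end

context fp_full begin

theorem mise_bound:
  assumes n: "n \<ge> 1" and h: "h > 0" and d: "\<delta> > 0"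
  shows "mise_fp M X f \<delta> h x0 n \<le> ennreal (4 / (real n * h)
     + 8 * (integral\<^sup>L lborel \<phi> * S1 \<delta> n + integral\<^sup>L lborel k * S2 \<delta> n) / real n
     + 128 * h^4 * integral\<^sup>L lborel (\<lambda>x. (f2 x)^2))"
proof -
  define Bn where "Bn j = {x0 + real_of_int j * h ..< x0 + (real_of_int j + 1) * h}" for j :: int
  define m where "m j = PB (Bn j) / h" for j
  define D where "D j \<omega> = (fp_bin X \<delta> h x0 n j \<omega> - m j)^2" for j \<omega>
  define V where "V j = PB (Bn j) / (real n * h^2) + 2 * (PhiB (Bn j) * S1 \<delta> n + KB (Bn j) * S2 \<delta> n) / (real n * h)" for j
  define a where "a = x0 + h/2"
  define J where "J x = \<lfloor>(x - a)/h\<rfloor>" for x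
  define bb where "bb j x = ((x - (x0 + (real_of_int j + 1/2) * h))/h) * m (j+1) + (1 - (x - (x0 + (real_of_int j + 1/2) * h))/h) * m j - f x" for j x
  define Wq where "Wq x = integral {x - 2*h..x + 2*h} (\<lambda>t. 32 * h^3 * (f2 t)^2)" for x
  define Bin where "Bin j = {a + real_of_int j * h ..< a + (real_of_int j + 1) * h}" for j
  define \<beta> where "\<beta> j = (\<integral>\<^sup>+ x. ennreal (2 * (bb j x)^2) * indicator (Bin j) x \<partial>lborel)" for j
  define Q where "Q = integral\<^sup>L lborel (\<lambda>x. (f2 x)^2)"
  have Q0: "Q \<ge> 0" unfolding Q_def by simp
  have Bn_m[measurable]: "Bn j \<in> sets borel" for j by (simp add: Bn_def)
  have D_meas[measurable]: "D j \<in> borel_measurable M" for j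
    unfolding D_def fp_bin_def by measurable
  have bb_meas[measurable]: "(\<lambda>x. bb j x) \<in> borel_measurable borel" for j
    unfolding bb_def by measurable
  have D0: "D j \<omega> \<ge> 0" for j \<omega> by (simp add: D_def)
  have V0: "V j \<ge> 0" for j
    unfolding V_def using n h d S1_nonneg[of \<delta> n] S2_nonneg[of \<delta> n]
    by (intro add_nonneg_nonneg divide_nonneg_pos mult_nonneg_nonneg) (auto simp: PB_def PhiB_def KB_def)

  have inbin: "x0 + (real_of_int (J x) + 1/2) * h \<le> x \<and> x < x0 + (real_of_int (J x) + 1/2) * h + h" for x
  proof -
    have "x \<in> Bin (J x)" unfolding Bin_def J_def using bin_iff[OF h] by blast
    then show ?thesis by (auto simp: Bin_def a_def algebra_simps)
  qed
  have pw: "(fp_est X \<delta> h x0 n \<omega> x - f x)^2 \<le> 2 * (D (J x + 1) \<omega> + D (J x) \<omega>) + 2 * (bb (J x) x)^2" for \<omega> x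
  proof -
    define j where "j = J x"
    define c where "c = x0 + (real_of_int j + 1/2) * h"
    define l where "l = (x - c) / h"
    have l: "0 \<le> l" "l \<le> 1" using inbin[of x] h by (auto simp: l_def c_def j_def field_simps)
    have fl: "\<lfloor>(x - x0 - h / 2) / h\<rfloor> = j" unfolding j_def J_def a_def by (simp add: algebra_simps)
    have "fp_est X \<delta> h x0 n \<omega> x - f x
        = l * (fp_bin X \<delta> h x0 n (j+1) \<omega> - m (j+1)) + (1 - l) * (fp_bin X \<delta> h x0 n j \<omega> - m j) + bb j x"
      unfolding fp_est_def Let_def fl bb_def l_def c_def using h by (simp add: field_simps)
    also have "(\<dots>)^2 \<le> 2 * ((fp_bin X \<delta> h x0 n (j+1) \<omega> - m (j+1))^2 + (fp_bin X \<delta> h x0 n j \<omega> - m j)^2) + 2 * (bb j x)^2"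
      by (rule sq_convex[OF l])
    finally show ?thesis unfolding D_def j_def by (simp add: algebra_simps)
  qed
  have bias: "2 * (bb (J x) x)^2 \<le> Wq x" for x
  proof -
    define j where "j = J x"
    define b where "b = x0 + real_of_int j * h"
    define G where "G = integral {x - 2*h..x + 2*h} (\<lambda>t. \<bar>f2 t\<bar>)"
    define I where "I = integral {x - 2*h..x + 2*h} (\<lambda>t. (f2 t)^2)"
    have Bj: "Bn j = {b..<b+h}" unfolding Bn_def b_def by (simp add: algebra_simps)
    have Bj1: "Bn (j+1) = {b+h..<b+h+h}" unfolding Bn_def b_def by (simp add: algebra_simps)
    have mj: "m j = integral {b..b+h} f / h" unfolding m_def Bj using PB_closed[OF h f_cont] by simp
    have mj1: "m (j+1) = integral {b+h..b+h+h} f / h" unfolding m_def Bj1 using PB_closed[OF h f_cont, of "b+h"] by simp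
    have c: "x0 + (real_of_int j + 1/2) * h = b + h/2" unfolding b_def by (simp add: algebra_simps)
    have bbabs: "\<bar>bb j x\<bar> \<le> 2 * h * G"
      unfolding bb_def mj mj1 c G_def
      by (rule bias_pt[OF d1f d2f f2_cont h refl]) (use inbin[of x] in \<open>auto simp: j_def[symmetric] c\<close>)
    have G0: "G \<ge> 0" unfolding G_def
      by (intro integral_nonneg integrable_continuous_real continuous_on_rabs continuous_on_subset[OF f2_cont]) auto
    have "(bb j x)^2 \<le> (2 * h * G)^2"
      using bbabs by (metis abs_le_square_iff abs_of_nonneg G0 h less_imp_le mult_nonneg_nonneg zero_le_numeral)
    also have "\<dots> = 4 * h^2 * G^2" by (simp add: power_mult_distrib)
    also have "G^2 \<le> ((x + 2*h) - (x - 2*h)) * I"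
      unfolding G_def I_def by (rule cs_interval[OF f2_cont]) (use h in simp)
    finally have "(bb j x)^2 \<le> 4 * h^2 * ((x + 2*h) - (x - 2*h)) * I" using h by (simp add: mult_left_mono)
    moreover have "Wq x = 32 * h^3 * I" unfolding Wq_def I_def by simp
    ultimately show ?thesis unfolding j_def by (simp add: power2_eq_square power3_eq_cube algebra_simps)
  qed
  have fbb: "0 \<le> fp_bin X \<delta> h x0 n j \<omega> \<and> fp_bin X \<delta> h x0 n j \<omega> \<le> 1/h" for j \<omega>
  proof -
    have s: "(\<Sum>k\<in>{1..n}. indicator {x0 + real_of_int j * h ..< x0 + (real_of_int j + 1) * h} (X (real k * \<delta>) \<omega>)) \<le> real (card {1..n}) * (1::real)"
      by (rule sum_bounded_above) (auto simp: indicator_def)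
    have s0: "0 \<le> (\<Sum>k\<in>{1..n}. indicator {x0 + real_of_int j * h ..< x0 + (real_of_int j + 1) * h} (X (real k * \<delta>) \<omega>) :: real)"
      by (intro sum_nonneg) auto
    have "fp_bin X \<delta> h x0 n j \<omega> \<le> (1 / (real n * h)) * real n"
      unfolding fp_bin_def using s h n by (intro mult_left_mono) auto
    then show ?thesis using s0 h n unfolding fp_bin_def by (auto simp: field_simps)
  qed
  have Dint: "integrable M (D j)" for j
  proof (rule integrable_const_bound[where B="(1/h + \<bar>m j\<bar>)^2"])
    show "AE \<omega> in M. norm (D j \<omega>) \<le> (1/h + \<bar>m j\<bar>)^2"
    proof (intro AE_I2)
      fix \<omega>
      have "\<bar>fp_bin X \<delta> h x0 n j \<omega> - m j\<bar> \<le> 1/h + \<bar>m j\<bar>" using fbb[of j \<omega>] by auto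
      then have "\<bar>fp_bin X \<delta> h x0 n j \<omega> - m j\<bar>^2 \<le> (1/h + \<bar>m j\<bar>)^2"
        by (intro power_mono) auto
      then show "norm (D j \<omega>) \<le> (1/h + \<bar>m j\<bar>)^2" by (simp add: D_def)
    qed
  qed simp
  have ED: "(\<integral>\<^sup>+ \<omega>. ennreal (2 * h * D j \<omega>) \<partial>M) \<le> ennreal (2 * h * V j)" for j
  proof -
    have BB: "{x0 + real_of_int j * h ..< x0 + real_of_int j * h + h} = Bn j" unfolding Bn_def by (simp add: algebra_simps)
    have eqD: "D j \<omega> = ((1 / (real n * h)) * (\<Sum>k\<in>{1..n}. indicator {x0 + real_of_int j * h ..< x0 + real_of_int j * h + h} (X (real k * \<delta>) \<omega>)) - PB {x0 + real_of_int j * h ..< x0 + real_of_int j * h + h} / h)^2" for \<omega>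
      unfolding D_def fp_bin_def m_def BB Bn_def by simp
    have vb: "(\<integral>\<omega>. D j \<omega> \<partial>M) \<le> V j"
      unfolding eqD V_def using var_bin[OF h d n, of "x0 + real_of_int j * h"] unfolding BB by simp
    have "(\<integral>\<^sup>+ \<omega>. ennreal (2 * h * D j \<omega>) \<partial>M) = ennreal (\<integral>\<omega>. 2 * h * D j \<omega> \<partial>M)"
      using Dint h D0 by (intro nn_integral_eq_integral) auto
    also have "\<dots> \<le> ennreal (2 * h * V j)"
      using vb h by (intro ennreal_leI) simp
    finally show ?thesis .
  qed
  have inner: "(\<integral>\<^sup>+ x. ennreal ((fp_est X \<delta> h x0 n \<omega> x - f x)^2) \<partial>lborel)
      \<le> (\<integral>\<^sup>+ j. ennreal (2 * h * D (j+1) \<omega>) + ennreal (2 * h * D j \<omega>) + \<beta> j \<partial>count_space UNIV)" for \<omega>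
  proof -
    define G where "G j x = ennreal (2 * (D (j+1) \<omega> + D j \<omega>)) + ennreal (2 * (bb j x)^2)" for j x
    have Gm: "G j \<in> borel_measurable lborel" for j unfolding G_def by measurable
    have "(\<integral>\<^sup>+ x. ennreal ((fp_est X \<delta> h x0 n \<omega> x - f x)^2) \<partial>lborel) \<le> (\<integral>\<^sup>+ x. G \<lfloor>(x - a)/h\<rfloor> x \<partial>lborel)"
    proof (intro nn_integral_mono)
      fix x
      have "ennreal ((fp_est X \<delta> h x0 n \<omega> x - f x)^2) \<le> ennreal (2 * (D (J x + 1) \<omega> + D (J x) \<omega>) + 2 * (bb (J x) x)^2)"
        by (intro ennreal_leI pw)
      also have "\<dots> = G (J x) x" unfolding G_def using D0 by (subst ennreal_plus) auto
      finally show "ennreal ((fp_est X \<delta> h x0 n \<omega> x - f x)^2) \<le> G \<lfloor>(x - a)/h\<rfloor> x" by (simp add: J_def)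
    qed
    also have "\<dots> = (\<integral>\<^sup>+ j. \<integral>\<^sup>+ x. G j x * indicator (Bin j) x \<partial>lborel \<partial>count_space UNIV)"
      unfolding Bin_def by (rule partition_nn[OF h Gm])
    also have "\<dots> = (\<integral>\<^sup>+ j. ennreal (2 * h * D (j+1) \<omega>) + ennreal (2 * h * D j \<omega>) + \<beta> j \<partial>count_space UNIV)"
    proof (intro nn_integral_cong)
      fix j :: int
      have em: "emeasure lborel (Bin j) = ennreal h" unfolding Bin_def using h by (simp add: algebra_simps)
      have "(\<integral>\<^sup>+ x. G j x * indicator (Bin j) x \<partial>lborel)
          = (\<integral>\<^sup>+ x. ennreal (2 * (D (j+1) \<omega> + D j \<omega>)) * indicator (Bin j) x + ennreal (2 * (bb j x)^2) * indicator (Bin j) x \<partial>lborel)"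
        unfolding G_def by (simp add: distrib_right)
      also have "\<dots> = ennreal (2 * (D (j+1) \<omega> + D j \<omega>)) * ennreal h + \<beta> j"
        unfolding \<beta>_def
      proof (subst nn_integral_add)
        show "(\<integral>\<^sup>+ x. ennreal (2 * (D (j+1) \<omega> + D j \<omega>)) * indicator (Bin j) x \<partial>lborel) +
              (\<integral>\<^sup>+ x. ennreal (2 * (bb j x)^2) * indicator (Bin j) x \<partial>lborel) =
              ennreal (2 * (D (j+1) \<omega> + D j \<omega>)) * ennreal h + (\<integral>\<^sup>+ x. ennreal (2 * (bb j x)^2) * indicator (Bin j) x \<partial>lborel)"
          using em by (subst nn_integral_cmult_indicator) (auto simp: Bin_def)
      qed (auto simp: Bin_def)
      also have "ennreal (2 * (D (j+1) \<omega> + D j \<omega>)) * ennreal h = ennreal (2 * h * D (j+1) \<omega>) + ennreal (2 * h * D j \<omega>)"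
        using D0 h by (simp add: ennreal_mult[symmetric] ennreal_plus[symmetric] algebra_simps del: ennreal_plus)
      finally show "(\<integral>\<^sup>+ x. G j x * indicator (Bin j) x \<partial>lborel) = ennreal (2 * h * D (j+1) \<omega>) + ennreal (2 * h * D j \<omega>) + \<beta> j" .
    qed
    finally show ?thesis .
  qed
  have totV: "(\<integral>\<^sup>+ j. ennreal (2 * h * V j) \<partial>count_space UNIV)
      = ennreal (2 / (real n * h) + 4 * (integral\<^sup>L lborel \<phi> * S1 \<delta> n + integral\<^sup>L lborel k * S2 \<delta> n) / real n)"
  proof -
    have s10: "S1 \<delta> n \<ge> 0" by (rule S1_nonneg)
    have s20: "S2 \<delta> n \<ge> 0" by (rule S2_nonneg[OF d])
    have i1: "integral\<^sup>L lborel \<phi> \<ge> 0" using \<phi>_pos by (intro integral_nonneg_AE) (auto intro: less_imp_le)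
    have i2: "integral\<^sup>L lborel k \<ge> 0" using k_pos by (intro integral_nonneg_AE) (auto intro: less_imp_le)
    have pw2: "ennreal (2 * h * V j) = ennreal (2 / (real n * h)) * ennreal (PB (Bn j))
        + ennreal (4 * S1 \<delta> n / real n) * ennreal (PhiB (Bn j)) + ennreal (4 * S2 \<delta> n / real n) * ennreal (KB (Bn j))" for j
    proof -
      have "2 * h * V j = 2 / (real n * h) * PB (Bn j) + 4 * S1 \<delta> n / real n * PhiB (Bn j) + 4 * S2 \<delta> n / real n * KB (Bn j)"
        unfolding V_def using h n by (simp add: field_simps power2_eq_square)
      moreover have "0 \<le> 2 / (real n * h) * PB (Bn j)" "0 \<le> 4 * S1 \<delta> n / real n * PhiB (Bn j)" "0 \<le> 4 * S2 \<delta> n / real n * KB (Bn j)"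
        using h s10 s20 by (auto simp: PB_def PhiB_def KB_def)
      ultimately show ?thesis using h s10 s20
        by (simp add: ennreal_mult[symmetric] ennreal_plus[symmetric] PB_def PhiB_def KB_def del: ennreal_plus)
    qed
    have "(\<integral>\<^sup>+ j. ennreal (2 * h * V j) \<partial>count_space UNIV)
      = ennreal (2 / (real n * h)) * (\<integral>\<^sup>+ j. ennreal (PB (Bn j)) \<partial>count_space UNIV)
        + ennreal (4 * S1 \<delta> n / real n) * (\<integral>\<^sup>+ j. ennreal (PhiB (Bn j)) \<partial>count_space UNIV)
        + ennreal (4 * S2 \<delta> n / real n) * (\<integral>\<^sup>+ j. ennreal (KB (Bn j)) \<partial>count_space UNIV)"
      unfolding pw2 by (simp add: nn_integral_add nn_integral_cmult)
    also have "\<dots> = ennreal (2 / (real n * h)) * 1 + ennreal (4 * S1 \<delta> n / real n) * ennreal (integral\<^sup>L lborel \<phi>)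
        + ennreal (4 * S2 \<delta> n / real n) * ennreal (integral\<^sup>L lborel k)"
      unfolding Bn_def using total_PB[OF h] total_PhiB[OF h] total_KB[OF h] by simp
    also have "\<dots> = ennreal (2 / (real n * h) + 4 * (integral\<^sup>L lborel \<phi> * S1 \<delta> n + integral\<^sup>L lborel k * S2 \<delta> n) / real n)"
    proof -
      have "2 / (real n * h) + 4 * (integral\<^sup>L lborel \<phi> * S1 \<delta> n + integral\<^sup>L lborel k * S2 \<delta> n) / real n
          = 2 / (real n * h) + 4 * S1 \<delta> n / real n * integral\<^sup>L lborel \<phi> + 4 * S2 \<delta> n / real n * integral\<^sup>L lborel k"
        by (simp add: add_divide_distrib algebra_simps)
      then show ?thesis using h s10 s20 i1 i2
        by (simp add: ennreal_mult[symmetric] ennreal_plus[symmetric] del: ennreal_plus)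
    qed
    finally show ?thesis .
  qed
  have totV1: "(\<integral>\<^sup>+ j. ennreal (2 * h * V (j + 1)) \<partial>count_space UNIV) = (\<integral>\<^sup>+ j. ennreal (2 * h * V j) \<partial>count_space UNIV)"
  proof -
    have "bij_betw (\<lambda>j::int. j + 1) UNIV UNIV"
      by (rule bij_betwI[where g="\<lambda>j. j - 1"]) auto
    then show ?thesis by (rule nn_integral_bij_count_space[where f="\<lambda>j. ennreal (2 * h * V j)"])
  qed
  have totB: "(\<integral>\<^sup>+ j. \<beta> j \<partial>count_space UNIV) \<le> ennreal (128 * h^4 * Q)"
  proof -
    have "(\<integral>\<^sup>+ j. \<beta> j \<partial>count_space UNIV) = (\<integral>\<^sup>+ x. ennreal (2 * (bb \<lfloor>(x - a)/h\<rfloor> x)^2) \<partial>lborel)"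
      unfolding \<beta>_def Bin_def by (rule partition_nn[OF h, symmetric]) measurable
    also have "\<dots> \<le> (\<integral>\<^sup>+ x. ennreal (Wq x) \<partial>lborel)"
      using bias by (intro nn_integral_mono ennreal_leI) (simp add: J_def)
    also have "\<dots> = ennreal (4 * h) * (\<integral>\<^sup>+ t. ennreal (32 * h^3 * (f2 t)^2) \<partial>lborel)"
      unfolding Wq_def using h by (intro window_integral) (auto intro!: continuous_intros f2_cont)
    also have "(\<integral>\<^sup>+ t. ennreal (32 * h^3 * (f2 t)^2) \<partial>lborel) = ennreal (32 * h^3 * Q)"
      unfolding Q_def using f2_L2 h by (subst nn_integral_eq_integral) auto
    also have "ennreal (4 * h) * ennreal (32 * h^3 * Q) = ennreal (128 * h^4 * Q)"
      using h Q0 by (simp add: ennreal_mult[symmetric] power_numeral_reduce algebra_simps)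
    finally show ?thesis by simp
  qed
  have "mise_fp M X f \<delta> h x0 n \<le> (\<integral>\<^sup>+ \<omega>. (\<integral>\<^sup>+ j. ennreal (2 * h * D (j+1) \<omega>) + ennreal (2 * h * D j \<omega>) + \<beta> j \<partial>count_space UNIV) \<partial>M)"
    unfolding mise_fp_def by (intro nn_integral_mono inner)
  also have "\<dots> = (\<integral>\<^sup>+ j. (\<integral>\<^sup>+ \<omega>. ennreal (2 * h * D (j+1) \<omega>) + ennreal (2 * h * D j \<omega>) + \<beta> j \<partial>M) \<partial>count_space UNIV)"
    by (rule nn_integral_count_space_nn_integral) auto
  also have "\<dots> \<le> (\<integral>\<^sup>+ j. ennreal (2 * h * V (j+1)) + ennreal (2 * h * V j) + \<beta> j \<partial>count_space UNIV)"
  proof (intro nn_integral_mono)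
    fix j :: int
    have "(\<integral>\<^sup>+ \<omega>. ennreal (2 * h * D (j+1) \<omega>) + ennreal (2 * h * D j \<omega>) + \<beta> j \<partial>M)
        = (\<integral>\<^sup>+ \<omega>. ennreal (2 * h * D (j+1) \<omega>) \<partial>M) + (\<integral>\<^sup>+ \<omega>. ennreal (2 * h * D j \<omega>) \<partial>M) + \<beta> j"
      by (simp add: nn_integral_add emeasure_space_1)
    also have "\<dots> \<le> ennreal (2 * h * V (j+1)) + ennreal (2 * h * V j) + \<beta> j"
      by (intro add_mono ED order.refl)
    finally show "(\<integral>\<^sup>+ \<omega>. ennreal (2 * h * D (j+1) \<omega>) + ennreal (2 * h * D j \<omega>) + \<beta> j \<partial>M)
        \<le> ennreal (2 * h * V (j+1)) + ennreal (2 * h * V j) + \<beta> j" .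
  qed
  also have "\<dots> = (\<integral>\<^sup>+ j. ennreal (2 * h * V (j+1)) \<partial>count_space UNIV) + (\<integral>\<^sup>+ j. ennreal (2 * h * V j) \<partial>count_space UNIV)
      + (\<integral>\<^sup>+ j. \<beta> j \<partial>count_space UNIV)"
    by (simp add: nn_integral_add)
  also have "\<dots> \<le> ennreal (2 / (real n * h) + 4 * (integral\<^sup>L lborel \<phi> * S1 \<delta> n + integral\<^sup>L lborel k * S2 \<delta> n) / real n)
      + ennreal (2 / (real n * h) + 4 * (integral\<^sup>L lborel \<phi> * S1 \<delta> n + integral\<^sup>L lborel k * S2 \<delta> n) / real n)
      + ennreal (128 * h^4 * Q)"
    unfolding totV1 totV by (intro add_mono totB order.refl)
  also have "\<dots> = ennreal (4 / (real n * h)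
     + 8 * (integral\<^sup>L lborel \<phi> * S1 \<delta> n + integral\<^sup>L lborel k * S2 \<delta> n) / real n
     + 128 * h^4 * Q)"
  proof -
    have i1: "integral\<^sup>L lborel \<phi> \<ge> 0" using \<phi>_pos by (intro integral_nonneg_AE) (auto intro: less_imp_le)
    have i2: "integral\<^sup>L lborel k \<ge> 0" using k_pos by (intro integral_nonneg_AE) (auto intro: less_imp_le)
    have nn1: "0 \<le> 2 / (real n * h) + 4 * (integral\<^sup>L lborel \<phi> * S1 \<delta> n + integral\<^sup>L lborel k * S2 \<delta> n) / real n"
      using i1 i2 S1_nonneg[of \<delta> n] S2_nonneg[OF d, of n] n h by (intro add_nonneg_nonneg) auto
    have nn2: "0 \<le> 128 * h^4 * Q" using Q0 by simp
    have aux3: "\<And>A B :: real. 0 \<le> A \<Longrightarrow> 0 \<le> B \<Longrightarrow> ennreal A + ennreal A + ennreal B = ennreal (A + A + B)"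
      by (simp add: ennreal_plus[symmetric] del: ennreal_plus)
    have e1: "ennreal (2 / (real n * h) + 4 * (integral\<^sup>L lborel \<phi> * S1 \<delta> n + integral\<^sup>L lborel k * S2 \<delta> n) / real n)
      + ennreal (2 / (real n * h) + 4 * (integral\<^sup>L lborel \<phi> * S1 \<delta> n + integral\<^sup>L lborel k * S2 \<delta> n) / real n)
      + ennreal (128 * h^4 * Q) = ennreal ((2 / (real n * h) + 4 * (integral\<^sup>L lborel \<phi> * S1 \<delta> n + integral\<^sup>L lborel k * S2 \<delta> n) / real n)
      + (2 / (real n * h) + 4 * (integral\<^sup>L lborel \<phi> * S1 \<delta> n + integral\<^sup>L lborel k * S2 \<delta> n) / real n)
      + 128 * h^4 * Q)"
      by (rule aux3[OF nn1 nn2])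
    have e2: "(2 / (real n * h) + 4 * (integral\<^sup>L lborel \<phi> * S1 \<delta> n + integral\<^sup>L lborel k * S2 \<delta> n) / real n)
      + (2 / (real n * h) + 4 * (integral\<^sup>L lborel \<phi> * S1 \<delta> n + integral\<^sup>L lborel k * S2 \<delta> n) / real n)
      + 128 * h^4 * Q = 4 / (real n * h)
     + 8 * (integral\<^sup>L lborel \<phi> * S1 \<delta> n + integral\<^sup>L lborel k * S2 \<delta> n) / real n
     + 128 * h^4 * Q" by (simp add: field_simps)
    show ?thesis using e1 e2 by (simp only:)
  qed
  finally show ?thesis unfolding Q_def .
qed

end

lemma S1_subset_sum:
  fixes g :: "nat \<Rightarrow> real"
  assumes d: "\<delta> > 0" and g0: "\<And>m. g m \<ge> 0" and u0: "u0 \<ge> 0"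
  shows "(\<Sum>m=1..n. if real m * \<delta> \<le> u0 then g m else 0) \<le> (\<Sum>m=1..nat \<lfloor>u0/\<delta>\<rfloor>. g m)"
proof -
  have "(\<Sum>m=1..n. if real m * \<delta> \<le> u0 then g m else 0) = (\<Sum>m\<in>{m\<in>{1..n}. real m * \<delta> \<le> u0}. g m)"
    by (rule sum.inter_filter[symmetric]) simp
  also have "\<dots> \<le> (\<Sum>m=1..nat \<lfloor>u0/\<delta>\<rfloor>. g m)"
  proof (rule sum_mono2)
    show "{m\<in>{1..n}. real m * \<delta> \<le> u0} \<subseteq> {1..nat \<lfloor>u0/\<delta>\<rfloor>}"
    proof
      fix m assume m: "m \<in> {m\<in>{1..n}. real m * \<delta> \<le> u0}"
      then have "real m \<le> u0/\<delta>" using d by (simp add: field_simps)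
      then have "int m \<le> \<lfloor>u0/\<delta>\<rfloor>" by (simp add: le_floor_iff)
      then show "m \<in> {1..nat \<lfloor>u0/\<delta>\<rfloor>}" using m by auto
    qed
  qed (auto intro: g0)
  finally show ?thesis .
qed

lemma S1_bound_lt1:
  assumes d: "\<delta> > 0" and g: "0 < \<gamma>" "\<gamma> < 1" and u0: "u0 > 0"
  shows "(\<Sum>m=1..n. if real m * \<delta> \<le> u0 then (real m * \<delta>) powr (-\<gamma>) else 0) \<le> u0 powr (1 - \<gamma>) / ((1 - \<gamma>) * \<delta>)"
proof -
  define N where "N = nat \<lfloor>u0/\<delta>\<rfloor>"
  have "(\<Sum>m=1..n. if real m * \<delta> \<le> u0 then (real m * \<delta>) powr (-\<gamma>) else 0) \<le> (\<Sum>m=1..N. (real m * \<delta>) powr (-\<gamma>))"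
    unfolding N_def using d u0 by (intro S1_subset_sum) auto
  also have "\<dots> = \<delta> powr (-\<gamma>) * (\<Sum>m=1..N. real m powr (-\<gamma>))"
    using d by (simp add: powr_mult sum_distrib_left mult.commute)
  also have "\<dots> \<le> \<delta> powr (-\<gamma>) * (real N powr (1 - \<gamma>) / (1 - \<gamma>))"
    by (intro mult_left_mono sum_powr_bound g) simp
  also have "real N powr (1 - \<gamma>) \<le> (u0/\<delta>) powr (1 - \<gamma>)"
  proof -
    have "real N \<le> u0/\<delta>" unfolding N_def using d u0 by (simp add: of_nat_nat)
    then show ?thesis using g by (intro powr_mono2) auto
  qed
  then have "\<delta> powr (-\<gamma>) * (real N powr (1 - \<gamma>) / (1 - \<gamma>)) \<le> \<delta> powr (-\<gamma>) * ((u0/\<delta>) powr (1 - \<gamma>) / (1 - \<gamma>))"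
    using g by (intro mult_left_mono divide_right_mono) auto
  also have "\<delta> powr (-\<gamma>) * ((u0/\<delta>) powr (1 - \<gamma>) / (1 - \<gamma>)) = u0 powr (1 - \<gamma>) / ((1 - \<gamma>) * \<delta>)"
  proof -
    have "\<delta> powr (-\<gamma>) * (u0/\<delta>) powr (1 - \<gamma>) = u0 powr (1 - \<gamma>) * (\<delta> powr (-\<gamma>) / \<delta> powr (1 - \<gamma>))"
      using d u0 by (simp add: powr_divide)
    also have "\<delta> powr (-\<gamma>) / \<delta> powr (1 - \<gamma>) = 1 / \<delta>"
      using d by (simp add: powr_diff[symmetric] powr_minus_divide powr_add[symmetric])
    finally show ?thesis by simp
  qed
  finally show ?thesis .
qed

lemma S1_bound_eq1:
  assumes d: "\<delta> > 0" "\<delta> \<le> u0"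
  shows "(\<Sum>m=1..n. if real m * \<delta> \<le> u0 then (real m * \<delta>) powr (-1) else 0) \<le> (1 + ln (u0/\<delta>)) / \<delta>"
proof -
  define N where "N = nat \<lfloor>u0/\<delta>\<rfloor>"
  have u0: "u0 > 0" using d by simp
  have N1: "N \<ge> 1" unfolding N_def using d by (simp add: le_nat_iff le_floor_iff)
  have "(\<Sum>m=1..n. if real m * \<delta> \<le> u0 then (real m * \<delta>) powr (-1) else 0) \<le> (\<Sum>m=1..N. (real m * \<delta>) powr (-1))"
    unfolding N_def using d u0 by (intro S1_subset_sum) auto
  also have "\<dots> = (1/\<delta>) * (\<Sum>m=1..N. 1 / real m)"
    using d by (simp add: powr_minus_divide sum_distrib_left mult.commute)
  also have "\<dots> \<le> (1/\<delta>) * (1 + ln (real N))"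
    using d by (intro mult_left_mono sum_harm_bound N1) simp
  also have "ln (real N) \<le> ln (u0/\<delta>)"
  proof -
    have "real N \<le> u0/\<delta>" unfolding N_def using d u0 by (simp add: of_nat_nat)
    then show ?thesis using N1 by (intro ln_mono) auto
  qed
  then have "(1/\<delta>) * (1 + ln (real N)) \<le> (1/\<delta>) * (1 + ln (u0/\<delta>))" using d by (intro mult_left_mono) auto
  finally show ?thesis by simp
qed

lemma indicator_sum_le1:
  fixes \<delta> x :: real
  assumes d: "\<delta> > 0" and T: "finite T"
  shows "(\<Sum>m\<in>T. indicator {(real m - 1) * \<delta> <.. real m * \<delta>} x) \<le> (1::ennreal)"
proof -
  have sub: "{m\<in>T. x \<in> {(real m - 1) * \<delta> <.. real m * \<delta>}} \<subseteq> {m. x \<in> {(real m - 1) * \<delta> <.. real m * \<delta>}}" by auto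
  have uniq: "m1 = m2" if "x \<in> {(real m1 - 1) * \<delta> <.. real m1 * \<delta>}" "x \<in> {(real m2 - 1) * \<delta> <.. real m2 * \<delta>}" for m1 m2 :: nat
  proof -
    have "(real m1 - 1) * \<delta> < real m2 * \<delta>" "(real m2 - 1) * \<delta> < real m1 * \<delta>" using that by auto
    then have "real m1 - 1 < real m2" "real m2 - 1 < real m1" using d by (auto simp: mult_less_cancel_right)
    then show ?thesis by linarith
  qed
  have card: "card {m\<in>T. x \<in> {(real m - 1) * \<delta> <.. real m * \<delta>}} \<le> Suc 0"
    using uniq T by (subst card_le_Suc0_iff_eq) auto
  have "(\<Sum>m\<in>T. indicator {(real m - 1) * \<delta> <.. real m * \<delta>} x) = (\<Sum>m\<in>T. if x \<in> {(real m - 1) * \<delta> <.. real m * \<delta>} then (1::ennreal) else 0)"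
    by (intro sum.cong) (auto simp: indicator_def)
  also have "\<dots> = (\<Sum>m\<in>{m\<in>T. x \<in> {(real m - 1) * \<delta> <.. real m * \<delta>}}. (1::ennreal))"
    by (rule sum.inter_filter[symmetric, OF T])
  also have "\<dots> = of_nat (card {m\<in>T. x \<in> {(real m - 1) * \<delta> <.. real m * \<delta>}})" by simp
  also have "\<dots> \<le> 1" using card by simp
  finally show ?thesis .
qed

lemma S2_bound:
  fixes \<pi> :: "real \<Rightarrow> real"
  assumes u0: "u0 > 0" and u1: "u1 > u0" and bdd: "bounded (\<pi> ` {u0..})"
    and dec: "\<exists>a. \<forall>u v. a \<le> u \<longrightarrow> u \<le> v \<longrightarrow> \<pi> v \<le> \<pi> u"
    and int: "set_integrable lborel {u1..} \<pi>"
    and pos: "\<And>u. u \<ge> u0 \<Longrightarrow> \<pi> u \<ge> 0"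
  shows "\<exists>C. \<forall>\<delta> n. 0 < \<delta> \<longrightarrow> \<delta> \<le> 1 \<longrightarrow>
           (\<Sum>m=1..n. if real m * \<delta> \<le> u0 then 0 else \<pi> (real m * \<delta>)) \<le> C / \<delta>"
proof -
  obtain a where a: "\<And>u v. a \<le> u \<Longrightarrow> u \<le> v \<Longrightarrow> \<pi> v \<le> \<pi> u" using dec by blast
  obtain B where B: "\<And>u. u \<ge> u0 \<Longrightarrow> \<bar>\<pi> u\<bar> \<le> B" using bdd by (auto simp: bounded_iff)
  have B0: "B \<ge> 0" using B[of u0] by simp
  define A where "A = max a u1"
  have A0: "A \<ge> 0" using u0 u1 by (simp add: A_def)
  define P where "P x = indicator {u1..} x * \<pi> x" for x
  have Pint: "integrable lborel P" using int by (simp add: P_def[abs_def] set_integrable_def)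
  have P0: "P x \<ge> 0" for x using pos u1 by (auto simp: P_def indicator_def)
  have Pm[measurable]: "P \<in> borel_measurable borel" using borel_measurable_integrable[OF Pint] by simp
  define IP where "IP = integral\<^sup>L lborel P"
  have IPeq: "(\<integral>\<^sup>+ x. ennreal (P x) \<partial>lborel) = ennreal IP"
    unfolding IP_def using Pint P0 by (intro nn_integral_eq_integral) auto
  show ?thesis
  proof (intro exI[of _ "B * (A + 1) + IP"] allI impI)
    fix \<delta> :: real and n :: nat
    assume d: "0 < \<delta>" "\<delta> \<le> 1"
    define T where "T = {m\<in>{1..n}. \<not> real m * \<delta> \<le> u0}"
    define T1 where "T1 = {m\<in>T. real m * \<delta> \<le> A + 1}"
    define T2 where "T2 = {m\<in>T. \<not> real m * \<delta> \<le> A + 1}"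
    have fin: "finite T" "finite T1" "finite T2" by (auto simp: T_def T1_def T2_def)
    have "(\<Sum>m=1..n. if real m * \<delta> \<le> u0 then 0 else \<pi> (real m * \<delta>)) = (\<Sum>m\<in>T. \<pi> (real m * \<delta>))"
      unfolding T_def by (subst sum.inter_filter) (auto intro!: sum.cong)
    also have "\<dots> = (\<Sum>m\<in>T1. \<pi> (real m * \<delta>)) + (\<Sum>m\<in>T2. \<pi> (real m * \<delta>))"
      unfolding T1_def T2_def using fin by (subst sum.union_disjoint[symmetric]) (auto intro!: sum.cong)
    also have "(\<Sum>m\<in>T1. \<pi> (real m * \<delta>)) \<le> B * (A + 1) / \<delta>"
    proof -
      have "(\<Sum>m\<in>T1. \<pi> (real m * \<delta>)) \<le> real (card T1) * B"
        by (rule sum_bounded_above) (use B in \<open>auto simp: T1_def T_def abs_le_iff\<close>)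
      also have "real (card T1) \<le> (A + 1) / \<delta>"
      proof -
        have "T1 \<subseteq> {1..nat \<lfloor>(A + 1)/\<delta>\<rfloor>}"
        proof
          fix m assume m: "m \<in> T1"
          then have "real m \<le> (A+1)/\<delta>" using d by (simp add: T1_def T_def field_simps)
          then have "int m \<le> \<lfloor>(A+1)/\<delta>\<rfloor>" by (simp add: le_floor_iff)
          then show "m \<in> {1..nat \<lfloor>(A + 1)/\<delta>\<rfloor>}" using m by (auto simp: T1_def T_def)
        qed
        then have "card T1 \<le> nat \<lfloor>(A + 1)/\<delta>\<rfloor>" using card_mono[of "{1..nat \<lfloor>(A + 1)/\<delta>\<rfloor>}"] by fastforce
        then have "real (card T1) \<le> real (nat \<lfloor>(A + 1)/\<delta>\<rfloor>)" by linarith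
        also have "\<dots> \<le> (A + 1)/\<delta>" using A0 d by (simp add: of_nat_nat)
        finally show ?thesis .
      qed
      then have "real (card T1) * B \<le> (A + 1) / \<delta> * B" using B0 by (intro mult_right_mono) auto
      finally show ?thesis by (simp add: mult.commute)
    qed
    also have "(\<Sum>m\<in>T2. \<pi> (real m * \<delta>)) \<le> IP / \<delta>"
    proof -
      have "ennreal (\<delta> * (\<Sum>m\<in>T2. \<pi> (real m * \<delta>))) = (\<Sum>m\<in>T2. ennreal (\<delta> * \<pi> (real m * \<delta>)))"
      proof -
        have "(\<Sum>m\<in>T2. ennreal (\<delta> * \<pi> (real m * \<delta>))) = ennreal (\<Sum>m\<in>T2. \<delta> * \<pi> (real m * \<delta>))"
          by (rule sum_ennreal) (use pos d in \<open>auto simp: T2_def T_def\<close>)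
        then show ?thesis by (simp add: sum_distrib_left)
      qed
      also have "\<dots> \<le> (\<Sum>m\<in>T2. \<integral>\<^sup>+ x. ennreal (P x) * indicator {(real m - 1) * \<delta> <.. real m * \<delta>} x \<partial>lborel)"
      proof (intro sum_mono)
        fix m assume m: "m \<in> T2"
        have mA: "real m * \<delta> > A + 1" using m by (simp add: T2_def)
        have "ennreal (\<delta> * \<pi> (real m * \<delta>)) = (\<integral>\<^sup>+ x. ennreal (\<pi> (real m * \<delta>)) * indicator {(real m - 1) * \<delta> <.. real m * \<delta>} x \<partial>lborel)"
          using d pos[of "real m * \<delta>"] mA u1 A0 by (subst nn_integral_cmult_indicator) (auto simp: A_def ennreal_mult algebra_simps)
        also have "\<dots> \<le> (\<integral>\<^sup>+ x. ennreal (P x) * indicator {(real m - 1) * \<delta> <.. real m * \<delta>} x \<partial>lborel)"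
        proof (intro nn_integral_mono)
          fix x
          show "ennreal (\<pi> (real m * \<delta>)) * indicator {(real m - 1) * \<delta> <.. real m * \<delta>} x
              \<le> ennreal (P x) * indicator {(real m - 1) * \<delta> <.. real m * \<delta>} x"
          proof (cases "x \<in> {(real m - 1) * \<delta> <.. real m * \<delta>}")
            case True
            then have x: "(real m - 1) * \<delta> < x" "x \<le> real m * \<delta>" by auto
            have "(real m - 1) * \<delta> = real m * \<delta> - \<delta>" by (simp add: algebra_simps)
            then have "x > A" using x mA d by linarith
            then have "a \<le> x" "u1 \<le> x" by (auto simp: A_def)
            then have "\<pi> (real m * \<delta>) \<le> \<pi> x" using a x by blast
            then show ?thesis using True \<open>u1 \<le> x\<close> by (auto simp: P_def intro!: ennreal_leI)
          qed simp
        qed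
        finally show "ennreal (\<delta> * \<pi> (real m * \<delta>)) \<le> (\<integral>\<^sup>+ x. ennreal (P x) * indicator {(real m - 1) * \<delta> <.. real m * \<delta>} x \<partial>lborel)" .
      qed
      also have "\<dots> = (\<integral>\<^sup>+ x. ennreal (P x) * (\<Sum>m\<in>T2. indicator {(real m - 1) * \<delta> <.. real m * \<delta>} x) \<partial>lborel)"
        by (subst nn_integral_sum[symmetric]) (auto simp: sum_distrib_left)
      also have "\<dots> \<le> (\<integral>\<^sup>+ x. ennreal (P x) \<partial>lborel)"
        using indicator_sum_le1[OF d(1) fin(3)] by (intro nn_integral_mono) (metis mult.right_neutral mult_left_mono zero_le)
      also have "\<dots> = ennreal IP" by (rule IPeq)
      finally have "ennreal (\<delta> * (\<Sum>m\<in>T2. \<pi> (real m * \<delta>))) \<le> ennreal IP" .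
      moreover have "IP \<ge> 0" unfolding IP_def using P0 by simp
      ultimately have "\<delta> * (\<Sum>m\<in>T2. \<pi> (real m * \<delta>)) \<le> IP" by (simp add: ennreal_le_iff)
      then show ?thesis using d by (simp add: field_simps)
    qed
    finally show "(\<Sum>m=1..n. if real m * \<delta> \<le> u0 then 0 else \<pi> (real m * \<delta>)) \<le> (B * (A + 1) + IP) / \<delta>"
      by (simp add: add_divide_distrib)
  qed
qed

lemma div_helper:
  fixes X Y \<delta> :: real and n :: nat
  assumes "n \<ge> 1" "\<delta> > 0" "X \<le> Y / \<delta>"
  shows "8 * X / real n \<le> 8 * Y / (real n * \<delta>)"
proof -
  have "8 * X / real n \<le> 8 * (Y / \<delta>) / real n" using assms by (intro divide_right_mono) auto
  also have "\<dots> = 8 * Y / (real n * \<delta>)" by simp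
  finally show ?thesis .
qed

theorem corollary2:
  fixes M :: "'w measure"
    and X :: "real \<Rightarrow> 'w \<Rightarrow> real"
    and f f1 f2 :: "real \<Rightarrow> real"
    and fu :: "real \<Rightarrow> real \<Rightarrow> real \<Rightarrow> real"
    and l0 \<nu> \<gamma>0 u0 u1 :: real
    and \<phi> k \<pi> :: "real \<Rightarrow> real"
    and c x0 :: real
  assumes prob: "prob_space M"
    and meas: "(\<lambda>(t, \<omega>). X t \<omega>) \<in> borel_measurable (borel \<Otimes>\<^sub>M M)"
    and f_nonneg: "\<And>x. f x \<ge> 0"
    and dens: "\<And>t. distributed M lborel (X t) (\<lambda>x. ennreal (f x))"
    and fu_nonneg: "\<And>u y z. u > 0 \<Longrightarrow> fu u y z \<ge> 0"
    and joint: "\<And>s t. s \<noteq> t \<Longrightarrow>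
        distributed M (lborel \<Otimes>\<^sub>M lborel) (\<lambda>\<omega>. (X s \<omega>, X t \<omega>))
          (\<lambda>(y, z). ennreal (fu \<bar>t - s\<bar> y z))"
    \<comment> \<open>A0'(i): f in C^2, f'' in L1, f and f'' in L2\<close>
    and d1f: "\<And>x. (f has_real_derivative f1 x) (at x)"
    and d2f: "\<And>x. (f1 has_real_derivative f2 x) (at x)"
    and f2_cont: "continuous_on UNIV f2"
    and f2_L1: "integrable lborel f2"
    and f_L2: "integrable lborel (\<lambda>x. (f x)\<^sup>2)"
    and f2_L2: "integrable lborel (\<lambda>x. (f2 x)\<^sup>2)"
    \<comment> \<open>A0'(ii): Hoelder condition on f''\<close>
    and l0_pos: "l0 > 0" and nu: "0 < \<nu>" "\<nu> \<le> 1"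
    and hoelder: "\<And>x y. \<bar>f2 x - f2 y\<bar> \<le> l0 * \<bar>x - y\<bar> powr \<nu>"
    \<comment> \<open>A0'(iii)\<close>
    and f_cont: "continuous_on UNIV f"
    and f_bdd: "bounded (range f)"
    \<comment> \<open>A1'(i)\<close>
    and \<gamma>0_pos: "\<gamma>0 > 0" and u0_pos: "u0 > 0"
    and \<phi>_pos: "\<And>y. \<phi> y > 0" and \<phi>_cont: "continuous_on UNIV \<phi>"
    and \<phi>_int: "integrable lborel \<phi>"
    and A1i: "\<And>u y z. 0 < u \<Longrightarrow> u \<le> u0 \<Longrightarrow> fu u y z \<le> \<phi> y * u powr (- \<gamma>0)"
    \<comment> \<open>A1'(ii)\<close>
    and k_pos: "\<And>y. k y > 0" and k_cont: "continuous_on UNIV k"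
    and k_int: "integrable lborel k"
    and \<pi>_bdd: "bounded (\<pi> ` {u0..})"
    and \<pi>_ult_dec: "\<exists>a. \<forall>u v. a \<le> u \<longrightarrow> u \<le> v \<longrightarrow> \<pi> v \<le> \<pi> u"
    and u1: "u1 > u0" and \<pi>_int: "set_integrable lborel {u1..} \<pi>"
    and A1ii: "\<And>u y z. u \<ge> u0 \<Longrightarrow> \<bar>fu u y z - f y * f z\<bar> \<le> k y * \<pi> u"
    \<comment> \<open>bandwidth h_n = c n^(-1/5)\<close>
    and c_pos: "0 < c"
  shows "(\<gamma>0 < 1 \<longrightarrow>
           (\<forall>d1>0. \<exists>C. \<forall>\<^sub>F n in sequentially.
              mise_fp M X f (d1 * (c * real n powr (-1/5))) (c * real n powr (-1/5)) x0 n
                \<le> ennreal (C / (real n * (d1 * (c * real n powr (-1/5)))))))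
       \<and> (\<gamma>0 = 1 \<longrightarrow>
           (\<forall>d2>0. \<exists>C. \<forall>\<^sub>F n in sequentially.
              (let h = c * real n powr (-1/5); \<delta> = d2 * h * ln (1 / h); T = real n * \<delta>
               in mise_fp M X f \<delta> h x0 n \<le> ennreal (C * ln T / T))))"
proof -
  interpret fp_full M X f fu \<phi> k \<pi> \<gamma>0 u0 f1 f2
  proof -
    interpret prob_space M by (rule prob)
    show "fp_full M X f fu \<phi> k \<pi> \<gamma>0 u0 f1 f2"
      by unfold_locales (use f_nonneg dens fu_nonneg joint \<phi>_pos \<phi>_cont \<phi>_int A1i k_pos k_cont k_int A1ii
          d1f d2f f2_cont f2_L2 in auto)
  qed
  have h5: "real n * (c * real n powr (-1/5))^5 = c^5" if "n \<ge> 1" for n :: nat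
  proof -
    have "(real n powr (-1/5))^5 = real n powr (-1/5 * 5)"
      using that by (subst powr_realpow[symmetric]) (auto simp: powr_powr)
    also have "\<dots> = 1 / real n" using that by (simp add: powr_minus_divide)
    finally show ?thesis using that by (simp add: power_mult_distrib)
  qed
  have pi0: "\<And>u. u \<ge> u0 \<Longrightarrow> \<pi> u \<ge> 0" by (rule pi_nonneg)
  obtain C2 where C2: "\<And>\<delta> n. 0 < \<delta> \<Longrightarrow> \<delta> \<le> 1 \<Longrightarrow> S2 \<delta> n \<le> C2 / \<delta>"
    using S2_bound[OF u0_pos u1 \<pi>_bdd \<pi>_ult_dec \<pi>_int pi0] unfolding S2_def by blast
  define I\<phi> where "I\<phi> = integral\<^sup>L lborel \<phi>"
  define IK where "IK = integral\<^sup>L lborel k"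
  define Q where "Q = integral\<^sup>L lborel (\<lambda>x. (f2 x)^2)"
  have I\<phi>0: "I\<phi> \<ge> 0" unfolding I\<phi>_def using \<phi>_pos by (intro integral_nonneg_AE) (auto intro: less_imp_le)
  have IK0: "IK \<ge> 0" unfolding IK_def using k_pos by (intro integral_nonneg_AE) (auto intro: less_imp_le)
  have Q0: "Q \<ge> 0" unfolding Q_def by simp
  show ?thesis
  proof (intro conjI impI allI)
    assume g1: "\<gamma>0 < 1"
    fix d1 :: real assume d1: "d1 > 0"
    define C where "C = 4 * d1 + 8 * I\<phi> * (u0 powr (1 - \<gamma>0) / (1 - \<gamma>0)) + 8 * IK * C2 + 128 * Q * c^5 * d1"
    have ev: "eventually (\<lambda>n::nat. n \<ge> 1 \<and> d1 * (c * real n powr (-1/5)) \<le> 1) sequentially"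
    proof (intro eventually_conj)
      show "eventually (\<lambda>n::nat. n \<ge> 1) sequentially" by (rule eventually_ge_at_top)
      show "eventually (\<lambda>n::nat. d1 * (c * real n powr (-1/5)) \<le> 1) sequentially" using c_pos d1 by real_asymp
    qed
    show "\<exists>C. \<forall>\<^sub>F n in sequentially.
              mise_fp M X f (d1 * (c * real n powr (-1/5))) (c * real n powr (-1/5)) x0 n
                \<le> ennreal (C / (real n * (d1 * (c * real n powr (-1/5)))))"
    proof (intro exI[of _ C] eventually_mono[OF ev], elim conjE)
      fix n :: nat assume n: "n \<ge> 1" and dle: "d1 * (c * real n powr (-1/5)) \<le> 1"
      define h where "h = c * real n powr (-1/5)"
      define \<delta> where "\<delta> = d1 * h"
      have h: "h > 0" unfolding h_def using n c_pos by simp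
      have d: "\<delta> > 0" "\<delta> \<le> 1" unfolding \<delta>_def using h d1 dle by (auto simp: h_def)
      have nd: "real n * \<delta> > 0" using n d by simp
      have t1: "4 / (real n * h) = 4 * d1 / (real n * \<delta>)" unfolding \<delta>_def using h d1 n by (simp add: field_simps)
      have t2: "8 * (I\<phi> * S1 \<delta> n) / real n \<le> 8 * I\<phi> * (u0 powr (1 - \<gamma>0) / (1 - \<gamma>0)) / (real n * \<delta>)"
      proof -
        have "S1 \<delta> n \<le> u0 powr (1 - \<gamma>0) / ((1 - \<gamma>0) * \<delta>)"
          unfolding S1_def by (rule S1_bound_lt1[OF d(1) \<gamma>0_pos g1 u0_pos])
        then have "I\<phi> * S1 \<delta> n \<le> I\<phi> * (u0 powr (1 - \<gamma>0) / ((1 - \<gamma>0) * \<delta>))" using I\<phi>0 by (rule mult_left_mono)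
        then have "I\<phi> * S1 \<delta> n \<le> (I\<phi> * (u0 powr (1 - \<gamma>0) / (1 - \<gamma>0))) / \<delta>" by simp
        from div_helper[OF n d(1) this] show ?thesis by (simp add: mult.assoc)
      qed
      have t3: "8 * (IK * S2 \<delta> n) / real n \<le> 8 * IK * C2 / (real n * \<delta>)"
      proof -
        have "IK * S2 \<delta> n \<le> IK * (C2 / \<delta>)" by (rule mult_left_mono[OF C2[OF d] IK0])
        then have "IK * S2 \<delta> n \<le> (IK * C2) / \<delta>" by simp
        from div_helper[OF n d(1) this] show ?thesis by (simp add: mult.assoc)
      qed
      have t4: "128 * h^4 * Q = 128 * Q * c^5 * d1 / (real n * \<delta>)"
      proof -
        have "real n * \<delta> * h^4 = d1 * (real n * h^5)" unfolding \<delta>_def by (simp add: eval_nat_numeral algebra_simps)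
        also have "\<dots> = d1 * c^5" unfolding h_def by (rule arg_cong[OF h5[OF n]])
        finally have e: "real n * \<delta> * h^4 = d1 * c^5" .
        have "h^4 = d1 * c^5 / (real n * \<delta>)" using e nd d n by (simp add: eq_divide_eq mult.commute)
        then show ?thesis by simp
      qed
      have main: "4 / (real n * h) + 8 * (I\<phi> * S1 \<delta> n + IK * S2 \<delta> n) / real n + 128 * h^4 * Q \<le> C / (real n * \<delta>)"
      proof -
        have "8 * (I\<phi> * S1 \<delta> n + IK * S2 \<delta> n) / real n = 8 * (I\<phi> * S1 \<delta> n) / real n + 8 * (IK * S2 \<delta> n) / real n"
          by (simp add: add_divide_distrib algebra_simps)
        then have "4 / (real n * h) + 8 * (I\<phi> * S1 \<delta> n + IK * S2 \<delta> n) / real n + 128 * h^4 * Q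
            \<le> 4 * d1 / (real n * \<delta>) + 8 * I\<phi> * (u0 powr (1 - \<gamma>0) / (1 - \<gamma>0)) / (real n * \<delta>)
              + 8 * IK * C2 / (real n * \<delta>) + 128 * Q * c^5 * d1 / (real n * \<delta>)"
          using t1 t2 t3 t4 by linarith
        also have "\<dots> = C / (real n * \<delta>)" unfolding C_def by (simp add: add_divide_distrib)
        finally show ?thesis .
      qed
      have "mise_fp M X f \<delta> h x0 n \<le> ennreal (4 / (real n * h) + 8 * (I\<phi> * S1 \<delta> n + IK * S2 \<delta> n) / real n + 128 * h^4 * Q)"
        unfolding I\<phi>_def IK_def Q_def by (rule mise_bound[OF n h d(1)])
      also have "\<dots> \<le> ennreal (C / (real n * \<delta>))" using main by (rule ennreal_leI)
      finally show "mise_fp M X f (d1 * (c * real n powr (-1/5))) (c * real n powr (-1/5)) x0 n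
                \<le> ennreal (C / (real n * (d1 * (c * real n powr (-1/5)))))"
        unfolding \<delta>_def h_def .
    qed
  next
    assume g1: "\<gamma>0 = 1"
    fix d2 :: real assume d2: "d2 > 0"
    define C where "C = 4 * d2 + 8 * I\<phi> * (\<bar>1 + ln u0\<bar> + 1) + 8 * IK * \<bar>C2\<bar> + 128 * Q * c^5 * d2"
    have ev: "eventually (\<lambda>n::nat. n \<ge> 1 \<and> c * real n powr (-1/5) < 1
       \<and> d2 * (c * real n powr (-1/5)) * ln (1 / (c * real n powr (-1/5))) \<le> 1
       \<and> d2 * (c * real n powr (-1/5)) * ln (1 / (c * real n powr (-1/5))) \<le> u0
       \<and> exp 1 \<le> real n * (d2 * (c * real n powr (-1/5)) * ln (1 / (c * real n powr (-1/5))))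
       \<and> 1 / (c * real n powr (-1/5)) \<le> real n * (d2 * (c * real n powr (-1/5)) * ln (1 / (c * real n powr (-1/5))))
       \<and> 1 / (d2 * (c * real n powr (-1/5)) * ln (1 / (c * real n powr (-1/5)))) \<le> real n * (d2 * (c * real n powr (-1/5)) * ln (1 / (c * real n powr (-1/5))))) sequentially"
    proof (intro eventually_conj)
      show "eventually (\<lambda>n::nat. n \<ge> 1) sequentially" by (rule eventually_ge_at_top)
    qed (use c_pos d2 u0_pos in real_asymp)+
    show "\<exists>C. \<forall>\<^sub>F n in sequentially.
              (let h = c * real n powr (-1/5); \<delta> = d2 * h * ln (1 / h); T = real n * \<delta>
               in mise_fp M X f \<delta> h x0 n \<le> ennreal (C * ln T / T))"
    proof (intro exI[of _ C] eventually_mono[OF ev], elim conjE)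
      fix n :: nat
      define h where "h = c * real n powr (-1/5)"
      define \<delta> where "\<delta> = d2 * h * ln (1 / h)"
      define T where "T = real n * \<delta>"
      define L where "L = ln T"
      assume n: "n \<ge> 1" and a1: "c * real n powr (-1/5) < 1"
        and a2: "d2 * (c * real n powr (-1/5)) * ln (1 / (c * real n powr (-1/5))) \<le> 1"
        and a3: "d2 * (c * real n powr (-1/5)) * ln (1 / (c * real n powr (-1/5))) \<le> u0"
        and a4: "exp 1 \<le> real n * (d2 * (c * real n powr (-1/5)) * ln (1 / (c * real n powr (-1/5))))"
        and a5: "1 / (c * real n powr (-1/5)) \<le> real n * (d2 * (c * real n powr (-1/5)) * ln (1 / (c * real n powr (-1/5))))"
        and a6: "1 / (d2 * (c * real n powr (-1/5)) * ln (1 / (c * real n powr (-1/5)))) \<le> real n * (d2 * (c * real n powr (-1/5)) * ln (1 / (c * real n powr (-1/5))))"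
      have h: "h > 0" "h < 1" unfolding h_def using n c_pos a1 by auto
      have lh: "ln (1 / h) > 0" using h by simp
      have d: "\<delta> > 0" "\<delta> \<le> 1" "\<delta> \<le> u0" unfolding \<delta>_def using h lh d2 a2 a3 by (auto simp: h_def)
      have T: "T > 0" unfolding T_def using n d by simp
      have L1: "L \<ge> 1" unfolding L_def using a4 T unfolding T_def \<delta>_def h_def
        by (metis exp_gt_zero ln_exp ln_le_cancel_iff)
      have lhT: "ln (1 / h) \<le> L" unfolding L_def using a5 h T unfolding T_def \<delta>_def h_def by (intro ln_mono) auto
      have ldT: "ln (1 / \<delta>) \<le> L" unfolding L_def using a6 d T unfolding T_def \<delta>_def h_def by (intro ln_mono) auto
      have t1: "4 / (real n * h) \<le> 4 * d2 * L / T"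
      proof -
        have "4 / (real n * h) = 4 * d2 * ln (1 / h) / T" unfolding T_def \<delta>_def using h lh d2 n by (simp add: field_simps)
        also have "\<dots> \<le> 4 * d2 * L / T" using lhT d2 T by (intro divide_right_mono mult_left_mono) auto
        finally show ?thesis .
      qed
      have t2: "8 * (I\<phi> * S1 \<delta> n) / real n \<le> 8 * I\<phi> * (\<bar>1 + ln u0\<bar> + 1) * L / T"
      proof -
        have "S1 \<delta> n \<le> (1 + ln (u0 / \<delta>)) / \<delta>"
          unfolding S1_def unfolding g1 by (rule S1_bound_eq1[OF d(1) d(3)])
        also have "1 + ln (u0 / \<delta>) = (1 + ln u0) + ln (1 / \<delta>)" using d u0_pos by (simp add: ln_div)
        also have "\<dots> \<le> (\<bar>1 + ln u0\<bar> + 1) * L"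
        proof -
          have "1 + ln u0 \<le> \<bar>1 + ln u0\<bar> * L" using L1 by (smt (verit) mult_le_cancel_left1 abs_ge_self abs_ge_zero)
          then show ?thesis using ldT by (simp add: algebra_simps)
        qed
        finally have "S1 \<delta> n \<le> (\<bar>1 + ln u0\<bar> + 1) * L / \<delta>" using d by (simp add: divide_right_mono)
        then have "I\<phi> * S1 \<delta> n \<le> I\<phi> * ((\<bar>1 + ln u0\<bar> + 1) * L / \<delta>)" using I\<phi>0 by (rule mult_left_mono)
        then have "I\<phi> * S1 \<delta> n \<le> (I\<phi> * (\<bar>1 + ln u0\<bar> + 1) * L) / \<delta>" by simp
        from div_helper[OF n d(1) this] show ?thesis unfolding T_def by (simp add: mult.assoc)
      qed
      have t3: "8 * (IK * S2 \<delta> n) / real n \<le> 8 * IK * \<bar>C2\<bar> * L / T"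
      proof -
        have "S2 \<delta> n \<le> C2 / \<delta>" by (rule C2[OF d(1) d(2)])
        also have "C2 \<le> \<bar>C2\<bar> * L" using L1 by (smt (verit) mult_le_cancel_left1 abs_ge_self abs_ge_zero)
        then have "C2 / \<delta> \<le> \<bar>C2\<bar> * L / \<delta>" using d by (simp add: divide_right_mono)
        finally have "IK * S2 \<delta> n \<le> IK * (\<bar>C2\<bar> * L / \<delta>)" using IK0 by (rule mult_left_mono)
        then have "IK * S2 \<delta> n \<le> (IK * \<bar>C2\<bar> * L) / \<delta>" by simp
        from div_helper[OF n d(1) this] show ?thesis unfolding T_def by (simp add: mult.assoc)
      qed
      have t4: "128 * h^4 * Q \<le> 128 * Q * c^5 * d2 * L / T"
      proof -
        have "T * h^4 = d2 * ln (1 / h) * (real n * h^5)" unfolding T_def \<delta>_def by (simp add: eval_nat_numeral algebra_simps)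
        also have "real n * h^5 = c^5" unfolding h_def by (rule h5[OF n])
        finally have "T * h^4 = d2 * c^5 * ln (1 / h)" by simp
        also have "\<dots> \<le> d2 * c^5 * L" using lhT d2 c_pos by (intro mult_left_mono) auto
        finally have "h^4 \<le> d2 * c^5 * L / T" using T by (simp add: field_simps)
        then have "128 * h^4 * Q \<le> 128 * (d2 * c^5 * L / T) * Q" using Q0 by (intro mult_right_mono) auto
        also have "\<dots> = 128 * Q * c^5 * d2 * L / T" by (simp add: algebra_simps)
        finally show ?thesis .
      qed
      have main: "4 / (real n * h) + 8 * (I\<phi> * S1 \<delta> n + IK * S2 \<delta> n) / real n + 128 * h^4 * Q \<le> C * L / T"
      proof -
        have "8 * (I\<phi> * S1 \<delta> n + IK * S2 \<delta> n) / real n = 8 * (I\<phi> * S1 \<delta> n) / real n + 8 * (IK * S2 \<delta> n) / real n"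
          by (simp add: add_divide_distrib algebra_simps)
        then have "4 / (real n * h) + 8 * (I\<phi> * S1 \<delta> n + IK * S2 \<delta> n) / real n + 128 * h^4 * Q
            \<le> 4 * d2 * L / T + 8 * I\<phi> * (\<bar>1 + ln u0\<bar> + 1) * L / T + 8 * IK * \<bar>C2\<bar> * L / T + 128 * Q * c^5 * d2 * L / T"
          using t1 t2 t3 t4 by linarith
        also have "\<dots> = C * L / T" unfolding C_def by (simp add: add_divide_distrib algebra_simps)
        finally show ?thesis .
      qed
      have "mise_fp M X f \<delta> h x0 n \<le> ennreal (4 / (real n * h) + 8 * (I\<phi> * S1 \<delta> n + IK * S2 \<delta> n) / real n + 128 * h^4 * Q)"
        unfolding I\<phi>_def IK_def Q_def by (rule mise_bound[OF n h(1) d(1)])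
      also have "\<dots> \<le> ennreal (C * L / T)" using main by (rule ennreal_leI)
      finally show "let h = c * real n powr (-1/5); \<delta> = d2 * h * ln (1 / h); T = real n * \<delta>
               in mise_fp M X f \<delta> h x0 n \<le> ennreal (C * ln T / T)"
        unfolding Let_def L_def T_def \<delta>_def h_def .
    qed
  qed
qed

end
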